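(* Let $\mathbf e=(e_1,\ldots,e_r)\in\mathbb{Z}^r$ and let $J_{\mathbf e}$ be the associated Jordan totient quotient of weight $w=\sum_i ie_i$. For every real $\beta$ there is a constant $C(\mathbf e,\beta)$ such that for $x\ge2$ \[ \sum_{n\le x}J_{\mathbf e}(n)n^\beta=\mathfrak{S}_{\mathbf e}M_{\beta+w}(x)+C(\mathbf e,\beta)+O_{\mathbf e,\beta}\big(x^{\beta+w}(\log x)^{|e_1|}\big). \]
   Context: $p$ denotes a prime. For $k\ge1$, $J_k(n)=n^k\prod_{p\mid n}(1-p^{-k})$. For $\mathbf e\in\mathbb{Z}^r$, $J_{\mathbf e}(n)=\prod_{i=1}^rJ_i(n)^{e_i}$, with weight $w=\sum_i ie_i$, and $\mathfrak{S}_{\mathbf e}=\prod_p\left(1+\frac{J_{\mathbf e}(p)p^{-w}-1}{p}\right)$. For real $\gamma$, $M_\gamma(x)=x^{\gamma+1}/(\gamma+1)$ if $\gamma\ne-1$ and $M_{-1}(x)=\log x$. *)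

theory Defs
  imports Complex_Main "HOL-Computational_Algebra.Primes"
begin

definition jordan :: "nat \<Rightarrow> nat \<Rightarrow> real" where
  "jordan k n = real n ^ k * (\<Prod>p\<in>prime_factors n. (1 - 1 / real p ^ k))"

definition jordan_quot :: "nat \<Rightarrow> (nat \<Rightarrow> int) \<Rightarrow> nat \<Rightarrow> real" where
  "jordan_quot r e n = (\<Prod>i=1..r. jordan i n powi e i)"

definition weight :: "nat \<Rightarrow> (nat \<Rightarrow> int) \<Rightarrow> int" where
  "weight r e = (\<Sum>i=1..r. int i * e i)"

definition sing_series :: "nat \<Rightarrow> (nat \<Rightarrow> int) \<Rightarrow> real" where
  "sing_series r e = lim (\<lambda>N. \<Prod>p\<in>{p. prime p \<and> p \<le> N}.
      1 + (jordan_quot r e p * real p powr (- real_of_int (weight r e)) - 1) / real p)"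

definition Mfun :: "real \<Rightarrow> real \<Rightarrow> real" where
  "Mfun \<gamma> x = (if \<gamma> \<noteq> -1 then x powr (\<gamma> + 1) / (\<gamma> + 1) else ln x)"

end

theory Submission
  imports Defs "HOL-Analysis.Analysis" "HOL-Real_Asymp.Real_Asymp"
begin


definition SP :: "nat \<Rightarrow> nat set set" where
  "SP N = {P. P \<subseteq> {p. prime p \<and> p \<le> N} \<and> \<Prod>P \<le> N}"

lemma finite_SP: "finite (SP N)"
proof -
  have "SP N \<subseteq> Pow {p. prime p \<and> p \<le> N}" unfolding SP_def by auto
  moreover have "finite (Pow {p. prime p \<and> p \<le> N})" by auto
  ultimately show ?thesis by (rule finite_subset)
qed

lemma SP_mono: "N \<le> M \<Longrightarrow> SP N \<subseteq> SP M"
  unfolding SP_def by auto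

lemma SP_finite_elem: "P \<in> SP N \<Longrightarrow> finite P"
  unfolding SP_def by (auto intro: finite_subset)

lemma SP_prime: "P \<in> SP N \<Longrightarrow> p \<in> P \<Longrightarrow> prime p"
  unfolding SP_def by auto

lemma prodP_pos: "finite P \<Longrightarrow> (\<forall>p\<in>P. prime p) \<Longrightarrow> \<Prod>P > (0::nat)"
  by (metis not_gr_zero prime_gt_0_nat prod_pos)

lemma prodP_sub_dvd: "finite P \<Longrightarrow> Q \<subseteq> P \<Longrightarrow> \<Prod>Q dvd (\<Prod>P::nat)"
  by (simp add: prod_dvd_prod_subset)

lemma prodP_sub_le: "finite P \<Longrightarrow> (\<forall>p\<in>P. prime p) \<Longrightarrow> Q \<subseteq> P \<Longrightarrow> \<Prod>Q \<le> (\<Prod>P::nat)"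
  using prodP_pos[of P] prodP_sub_dvd[of P Q] by (simp add: dvd_imp_le)

lemma prime_dvd_prodP: "finite P \<Longrightarrow> (\<forall>p\<in>P. prime p) \<Longrightarrow> prime q \<Longrightarrow> q dvd \<Prod>P \<longleftrightarrow> q \<in> P"
  by (metis dvd_prodI prime_dvd_prod_iff primes_dvd_imp_eq)

lemma inj_prodP: "inj_on (\<lambda>P. \<Prod>P::nat) {P. finite P \<and> (\<forall>p\<in>P. prime p)}"
proof (rule inj_onI)
  fix P Q assume P: "P \<in> {P. finite P \<and> (\<forall>p\<in>P. prime p)}" and Q: "Q \<in> {P. finite P \<and> (\<forall>p\<in>P. prime p)}"
    and eq: "\<Prod>P = (\<Prod>Q::nat)"
  show "P = Q"
  proof
    show "P \<subseteq> Q" using P Q eq prime_dvd_prodP by (smt (verit) mem_Collect_eq subsetI)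
    show "Q \<subseteq> P" using P Q eq prime_dvd_prodP by (smt (verit) mem_Collect_eq subsetI)
  qed
qed

lemma SP_subset: "P \<in> SP N \<Longrightarrow> Q \<subseteq> P \<Longrightarrow> Q \<in> SP N"
proof -
  assume a: "P \<in> SP N" "Q \<subseteq> P"
  have "finite P" using a SP_finite_elem by auto
  moreover have "\<forall>p\<in>P. prime p" using a SP_prime by auto
  ultimately have "\<Prod>Q \<le> \<Prod>P" using prodP_sub_le a by blast
  thus ?thesis using a unfolding SP_def by auto
qed

lemma SP_char: "P \<in> SP N \<longleftrightarrow> finite P \<and> (\<forall>p\<in>P. prime p) \<and> \<Prod>P \<le> N"
proof
  assume "P \<in> SP N" thus "finite P \<and> (\<forall>p\<in>P. prime p) \<and> \<Prod>P \<le> N"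
    using SP_finite_elem SP_prime unfolding SP_def by blast
next
  assume h: "finite P \<and> (\<forall>p\<in>P. prime p) \<and> \<Prod>P \<le> N"
  have "p \<le> N" if "p \<in> P" for p
    using prodP_sub_le[of P "{p}"] h that by auto
  thus "P \<in> SP N" using h unfolding SP_def by auto
qed

lemma subset_pf_iff: fixes n :: nat shows "n > 0 \<Longrightarrow> finite P \<Longrightarrow> (\<forall>p\<in>P. prime p) \<Longrightarrow>
   P \<subseteq> prime_factors n \<longleftrightarrow> \<Prod>P dvd n"
proof
  assume n: "n > 0" and fin: "finite P" and pr: "\<forall>p\<in>P. prime p" and sub: "P \<subseteq> prime_factors n"
  show "\<Prod>P dvd n"
    using fin pr sub
  proof (induction P rule: finite_induct)
    case empty thus ?case by simp
  next
    case (insert p F)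
    have "coprime p (\<Prod>F)"
      proof -
      have "\<not> p dvd \<Prod>F" using prime_dvd_prodP[of F p] insert by auto
      thus ?thesis using insert prime_imp_coprime[of p "\<Prod>F"] by auto
    qed
    moreover have "p dvd n" using insert by auto
    moreover have "\<Prod>F dvd n" using insert by auto
    ultimately show ?case using insert by (simp add: divides_mult)
  qed
next
  assume n: "n > 0" and fin: "finite P" and pr: "\<forall>p\<in>P. prime p" and d: "\<Prod>P dvd n"
  show "P \<subseteq> prime_factors n"
  proof
    fix p assume "p \<in> P"
    hence "p dvd n" using d fin by (meson dvd_prodI dvd_trans)
    thus "p \<in> prime_factors n" using n pr \<open>p\<in>P\<close> by (auto simp: in_prime_factors_iff)
  qed
qed




definition phi :: "nat \<Rightarrow> (nat \<Rightarrow> int) \<Rightarrow> nat \<Rightarrow> real" where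
  "phi r e p = (\<Prod>i=1..r. (1 - 1 / real p ^ i) powi e i)"

lemma prod_powi: "finite A \<Longrightarrow> (\<Prod>x\<in>A. f x :: real) powi k = (\<Prod>x\<in>A. f x powi k)"
  by (induction A rule: finite_induct) (auto simp: power_int_mult_distrib)

lemma jq_eq:
  assumes n: "n \<ge> 1"
  shows "jordan_quot r e n * real n powr \<beta> =
         real n powr (\<beta> + real_of_int (weight r e)) * (\<Prod>p\<in>prime_factors n. phi r e p)"
proof -
  have npos: "real n > 0" using n by auto
  have 1: "jordan i n powi e i = real n powr (real i * real_of_int (e i)) *
        (\<Prod>p\<in>prime_factors n. (1 - 1 / real p ^ i) powi e i)" for i
  proof -
    have "jordan i n powi e i = (real n ^ i) powi e i * (\<Prod>p\<in>prime_factors n. (1 - 1 / real p ^ i)) powi e i"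
      unfolding jordan_def by (simp add: power_int_mult_distrib)
    also have "(real n ^ i) powi e i = real n powr (real i * real_of_int (e i))"
    proof -
      have "(real n ^ i) powi e i = real n powi (int i * e i)" by (simp add: power_int_power)
      also have "\<dots> = real n powr real_of_int (int i * e i)"
        using npos powr_real_of_int'[of "real n" "int i * e i"] by simp
      finally show ?thesis by simp
    qed
    finally show ?thesis by (simp add: prod_powi)
  qed
  have "jordan_quot r e n = (\<Prod>i=1..r. real n powr (real i * real_of_int (e i))) *
      (\<Prod>i=1..r. \<Prod>p\<in>prime_factors n. (1 - 1 / real p ^ i) powi e i)"
    unfolding jordan_quot_def 1 by (simp add: prod.distrib)
  also have "(\<Prod>i=1..r. real n powr (real i * real_of_int (e i))) = real n powr real_of_int (weight r e)"
    using npos unfolding weight_def by (simp add: powr_sum)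
  also have "(\<Prod>i=1..r. \<Prod>p\<in>prime_factors n. (1 - 1 / real p ^ i) powi e i) =
      (\<Prod>p\<in>prime_factors n. phi r e p)"
    unfolding phi_def by (rule prod.swap)
  finally show ?thesis using npos by (simp add: powr_add)
qed

definition near1 :: "real \<Rightarrow> (real \<Rightarrow> real) \<Rightarrow> bool" where
  "near1 a F \<longleftrightarrow> (\<exists>C. \<forall>t. 0 < t \<and> t \<le> 1/2 \<longrightarrow> \<bar>F t - 1 - a * t\<bar> \<le> C * t^2)"

lemma near1_mult:
  assumes "near1 a F" "near1 b H"
  shows "near1 (a + b) (\<lambda>t. F t * H t)"
proof -
  obtain C1 where C1: "\<And>t. 0 < t \<Longrightarrow> t \<le> 1/2 \<Longrightarrow> \<bar>F t - 1 - a * t\<bar> \<le> C1 * t^2"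
    using assms(1) unfolding near1_def by blast
  obtain C2 where C2: "\<And>t. 0 < t \<Longrightarrow> t \<le> 1/2 \<Longrightarrow> \<bar>H t - 1 - b * t\<bar> \<le> C2 * t^2"
    using assms(2) unfolding near1_def by blast
  define C1' where "C1' = max C1 0"
  define C2' where "C2' = max C2 0"
  define U where "U = 1 + \<bar>b\<bar> + C2'"
  show ?thesis unfolding near1_def
  proof (intro exI allI impI)
    fix t :: real assume t: "0 < t \<and> t \<le> 1/2"
    have t1: "t \<le> 1" "t^2 \<le> t" using t by (auto simp: power2_eq_square mult_le_cancel_left1)
    have e1: "\<bar>F t - 1 - a * t\<bar> \<le> C1' * t^2" using C1[of t] t unfolding C1'_def
      by (smt (verit) mult_right_mono zero_le_power2)
    have e2: "\<bar>H t - 1 - b * t\<bar> \<le> C2' * t^2" using C2[of t] t unfolding C2'_def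
      by (smt (verit) mult_right_mono zero_le_power2)
    have "C2' * t^2 \<le> C2'" using t1 t C2'_def
      by (smt (verit) mult_left_le zero_le_power2)
    moreover have "\<bar>b * t\<bar> \<le> \<bar>b\<bar>" using t1 t by (simp add: abs_mult mult_left_le)
    ultimately have Hb: "\<bar>H t\<bar> \<le> U" using e2 unfolding U_def by linarith
    have Hm1: "\<bar>H t - 1\<bar> \<le> (\<bar>b\<bar> + C2') * t"
    proof -
      have "\<bar>H t - 1\<bar> \<le> \<bar>b * t\<bar> + C2' * t^2" using e2 by linarith
      also have "\<dots> \<le> \<bar>b\<bar> * t + C2' * t" using t t1 C2'_def
        by (simp add: abs_mult mult_left_mono)
      finally show ?thesis by (simp add: algebra_simps)
    qed
    have eq: "F t * H t - 1 - (a + b) * t = (F t - 1 - a * t) * H t + (H t - 1 - b * t) + a * t * (H t - 1)"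
      by (simp add: algebra_simps)
    have "\<bar>(F t - 1 - a * t) * H t\<bar> \<le> C1' * t^2 * U"
      unfolding abs_mult using e1 Hb by (intro mult_mono) (auto simp: C1'_def)
    moreover have "\<bar>a * t * (H t - 1)\<bar> \<le> \<bar>a\<bar> * (\<bar>b\<bar> + C2') * t^2"
    proof -
      have "\<bar>a * t * (H t - 1)\<bar> = \<bar>a\<bar> * t * \<bar>H t - 1\<bar>" using t by (simp add: abs_mult)
      also have "\<dots> \<le> \<bar>a\<bar> * t * ((\<bar>b\<bar> + C2') * t)" using Hm1 t by (intro mult_left_mono) auto
      finally show ?thesis by (simp add: power2_eq_square algebra_simps)
    qed
    ultimately have "\<bar>F t * H t - 1 - (a + b) * t\<bar> \<le> C1' * t^2 * U + C2' * t^2 + \<bar>a\<bar> * (\<bar>b\<bar> + C2') * t^2"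
      unfolding eq using e2 by linarith
    thus "\<bar>F t * H t - 1 - (a + b) * t\<bar> \<le> (C1' * U + C2' + \<bar>a\<bar> * (\<bar>b\<bar> + C2')) * t^2"
      by (simp add: algebra_simps)
  qed
qed

lemma near1_one: "near1 0 (\<lambda>t. 1)"
  unfolding near1_def by (intro exI[of _ 0]) auto

lemma near1_power: "near1 a F \<Longrightarrow> near1 (real n * a) (\<lambda>t. F t ^ n)"
proof (induction n)
  case 0 thus ?case using near1_one by simp
next
  case (Suc n)
  have "near1 (a + real n * a) (\<lambda>t. F t * F t ^ n)" by (rule near1_mult[OF Suc.prems Suc.IH[OF Suc.prems]])
  thus ?case by (simp add: algebra_simps)
qed

lemma near1_prod: "finite I \<Longrightarrow> (\<And>i. i \<in> I \<Longrightarrow> near1 (a i) (F i)) \<Longrightarrow>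
   near1 (\<Sum>i\<in>I. a i) (\<lambda>t. \<Prod>i\<in>I. F i t)"
proof (induction I rule: finite_induct)
  case empty thus ?case using near1_one by simp
next
  case (insert i I)
  have "near1 (a i + (\<Sum>i\<in>I. a i)) (\<lambda>t. F i t * (\<Prod>i\<in>I. F i t))"
    using insert by (intro near1_mult) auto
  thus ?case using insert by simp
qed

lemma near1_base1: "near1 (-1) (\<lambda>t. 1 - t)"
  unfolding near1_def by (intro exI[of _ 0]) auto

lemma near1_base1i: "near1 1 (\<lambda>t. inverse (1 - t))"
  unfolding near1_def
proof (intro exI[of _ 2] allI impI)
  fix t :: real assume t: "0 < t \<and> t \<le> 1/2"
  have "inverse (1 - t) - 1 - 1 * t = t^2 / (1 - t)" using t
    by (simp add: field_simps power2_eq_square)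
  also have "\<bar>\<dots>\<bar> \<le> 2 * t^2" using t by (simp add: field_simps)
  finally show "\<bar>inverse (1 - t) - 1 - 1 * t\<bar> \<le> 2 * t\<^sup>2" .
qed

lemma tpow_le: "0 < t \<Longrightarrow> t \<le> 1/2 \<Longrightarrow> 2 \<le> i \<Longrightarrow> t ^ i \<le> (t::real)^2"
  by (simp add: power_decreasing)

lemma near1_base2: "2 \<le> i \<Longrightarrow> near1 0 (\<lambda>t. 1 - t ^ i)"
  unfolding near1_def
proof (intro exI[of _ 1] allI impI)
  fix t :: real assume t: "0 < t \<and> t \<le> 1/2" and i: "2 \<le> i"
  show "\<bar>1 - t ^ i - 1 - 0 * t\<bar> \<le> 1 * t\<^sup>2" using tpow_le[of t i] t i by simp
qed

lemma near1_base2i: "2 \<le> i \<Longrightarrow> near1 0 (\<lambda>t. inverse (1 - t ^ i))"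
  unfolding near1_def
proof (intro exI[of _ 2] allI impI)
  fix t :: real assume t: "0 < t \<and> t \<le> 1/2" and i: "2 \<le> i"
  have ti1: "t ^ i \<le> t^2" using tpow_le[of t i] t i by auto
  have "t^2 \<le> (1/2)^2" using t by (intro power_mono) auto
  hence ti: "t ^ i \<le> t^2" "t^2 \<le> 1/4" using ti1 by (auto simp: power2_eq_square)
  have pos: "0 \<le> t ^ i" using t by simp
  have "inverse (1 - t ^ i) - 1 - 0 * t = t ^ i / (1 - t ^ i)" using ti
    by (simp add: field_simps)
  also have "\<bar>\<dots>\<bar> \<le> 2 * t ^ i"
  proof -
    have u: "t^i \<le> 1/4" using ti by linarith
    have "t^i \<le> 2*t^i*(1-t^i)" using mult_left_mono[of "3/4" "1-t^i" "2*t^i"] u pos by auto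
    hence "t^i/(1-t^i) \<le> 2*t^i" using u by (simp add: divide_le_eq)
    moreover have "0 \<le> t^i/(1-t^i)" using u pos by simp
    hence "\<bar>t^i/(1-t^i)\<bar> = t^i/(1-t^i)" by (rule abs_of_nonneg)
    ultimately show ?thesis by linarith
  qed
  also have "\<dots> \<le> 2 * t^2" using ti by simp
  finally show "\<bar>inverse (1 - t ^ i) - 1 - 0 * t\<bar> \<le> 2 * t\<^sup>2" .
qed

lemma near1_factor:
  assumes "1 \<le> i"
  shows "near1 (if i = 1 then - real_of_int k else 0) (\<lambda>t. (1 - t ^ i) powi k)"
proof (cases "k \<ge> 0")
  case True
  have eq: "(\<lambda>t. (1 - t ^ i) powi k) = (\<lambda>t. (1 - t ^ i) ^ nat k)"
    using True by (simp add: power_int_def)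
  show ?thesis
  proof (cases "i = 1")
    case True
    show ?thesis unfolding eq using near1_power[OF near1_base1, of "nat k"] \<open>k \<ge> 0\<close> True by simp
  next
    case False
    show ?thesis unfolding eq using near1_power[OF near1_base2, of i "nat k"] False assms by simp
  qed
next
  case False
  have eq: "(\<lambda>t. (1 - t ^ i) powi k) = (\<lambda>t. inverse (1 - t ^ i) ^ nat (-k))"
    using False by (simp add: power_int_def)
  show ?thesis
  proof (cases "i = 1")
    case True
    show ?thesis unfolding eq using near1_power[OF near1_base1i, of "nat (-k)"] \<open>\<not> k \<ge> 0\<close> True by simp
  next
    case False
    show ?thesis unfolding eq using near1_power[OF near1_base2i, of i "nat (-k)"] False assms by simp
  qed
qed

lemma phi_near:
  assumes r: "1 \<le> r"
  shows "\<exists>B\<ge>0. \<forall>p. prime p \<longrightarrow> \<bar>phi r e p - 1 + real_of_int (e 1) / real p\<bar> \<le> B / real p ^ 2"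
proof -
  have "near1 (\<Sum>i=1..r. if i = 1 then - real_of_int (e i) else 0) (\<lambda>t. \<Prod>i=1..r. (1 - t ^ i) powi e i)"
    by (intro near1_prod near1_factor) auto
  moreover have "(\<Sum>i=1..r. if i = 1 then - real_of_int (e i) else 0) = - real_of_int (e 1)"
    using r by (simp add: sum.delta)
  ultimately obtain C where C: "\<And>t. 0 < t \<Longrightarrow> t \<le> 1/2 \<Longrightarrow>
     \<bar>(\<Prod>i=1..r. (1 - t ^ i) powi e i) - 1 - (- real_of_int (e 1)) * t\<bar> \<le> C * t^2"
    unfolding near1_def by auto
  show ?thesis
  proof (intro exI[of _ "max C 0"] conjI allI impI)
    fix p :: nat assume p: "prime p"
    have p2: "real p \<ge> 2" using prime_ge_2_nat[OF p] by simp
    have "\<bar>(\<Prod>i=1..r. (1 - (1/real p) ^ i) powi e i) - 1 - (- real_of_int (e 1)) * (1/real p)\<bar> \<le> C * (1/real p)^2"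
      using p2 by (intro C) auto
    moreover have "(\<Prod>i=1..r. (1 - (1/real p) ^ i) powi e i) = phi r e p"
      unfolding phi_def by (simp add: power_one_over)
    ultimately have "\<bar>phi r e p - 1 + real_of_int (e 1) / real p\<bar> \<le> C / real p ^ 2"
      by (simp add: power_one_over)
    also have "\<dots> \<le> max C 0 / real p ^ 2" using p2 by (intro divide_right_mono) auto
    finally show "\<bar>phi r e p - 1 + real_of_int (e 1) / real p\<bar> \<le> max C 0 / real p ^ 2" .
  qed simp
qed




definition Gs :: "nat \<Rightarrow> (nat \<Rightarrow> int) \<Rightarrow> nat set \<Rightarrow> real" where
  "Gs r e P = (\<Prod>p\<in>P. phi r e p - 1)"

lemma inv_sq_sum: "N \<ge> 1 \<Longrightarrow> (\<Sum>n\<in>{2..N}. 1 / real n ^ 2) \<le> 1 - 1 / real N"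
proof (induction N rule: dec_induct)
  case base thus ?case by simp
next
  case (step N)
  have "{2..Suc N} = insert (Suc N) {2..N}" using step.hyps by auto
  hence "(\<Sum>n\<in>{2..Suc N}. 1 / real n ^ 2) = 1 / real (Suc N) ^ 2 + (\<Sum>n\<in>{2..N}. 1 / real n ^ 2)"
    by simp
  also have "\<dots> \<le> 1 / real (Suc N) ^ 2 + (1 - 1 / real N)" using step by simp
  also have "\<dots> \<le> 1 - 1 / real (Suc N)"
  proof -
    have N: "real N \<ge> 1" using step by simp
    have "1 / real (Suc N) ^ 2 \<le> 1 / (real N * real (Suc N))"
    proof (rule frac_le)
      have "real N * real (Suc N) \<le> real (Suc N) * real (Suc N)" by (intro mult_right_mono) auto
      thus "real N * real (Suc N) \<le> real (Suc N) ^ 2" by (simp add: power2_eq_square)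
      show "0 < real N * real (Suc N)" using N by simp
    qed auto
    also have "\<dots> = 1 / real N - 1 / real (Suc N)" using N by (simp add: field_simps)
    finally have "1 / real (Suc N) ^ 2 \<le> 1 / real N - 1 / real (Suc N)" .
    thus ?thesis by simp
  qed
  finally show ?case .
qed

lemma harm_le_ln: "N \<ge> 1 \<Longrightarrow> (harm N :: real) \<le> 1 + ln (real N)"
proof -
  assume "N \<ge> 1"
  then obtain m where m: "N = Suc m" by (cases N) auto
  have "harm (Suc m) - ln (real (Suc m)) \<le> (harm (Suc 0) :: real) - ln (real (Suc 0))"
    using decseqD[OF decseq_harm_diff_ln, of 0 m] by simp
  thus ?thesis using m by (simp add: harm_def)
qed

lemma sum_inv_prod_SP: "N \<ge> 1 \<Longrightarrow> (\<Sum>Q\<in>SP N. \<Prod>p\<in>Q. 1 / real p) \<le> 1 + ln (real N)"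
proof -
  assume N: "N \<ge> 1"
  have "(\<Sum>Q\<in>SP N. \<Prod>p\<in>Q. 1 / real p) = (\<Sum>Q\<in>SP N. 1 / real (\<Prod>Q))"
  proof (intro sum.cong refl)
    fix Q :: "nat set"
    show "(\<Prod>p\<in>Q. 1 / real p) = 1 / real (\<Prod>Q)"
      by (induct Q rule: infinite_finite_induct) auto
  qed
  also have "\<dots> = (\<Sum>n\<in>(\<lambda>Q. \<Prod>Q) ` SP N. 1 / real n)"
  proof -
    have "inj_on (\<lambda>Q. \<Prod>Q::nat) (SP N)"
      by (rule inj_on_subset[OF inj_prodP]) (auto simp: SP_char)
    thus ?thesis by (simp add: sum.reindex)
  qed
  also have "\<dots> \<le> (\<Sum>n\<in>{1..N}. 1 / real n)"
  proof (rule sum_mono2)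
    show "(\<lambda>Q. \<Prod>Q) ` SP N \<subseteq> {1..N}"
    proof
      fix n assume "n \<in> (\<lambda>Q. \<Prod>Q) ` SP N"
      then obtain Q where Q: "Q \<in> SP N" "n = \<Prod>Q" by auto
      have "finite Q" "\<forall>p\<in>Q. prime p" using Q(1) unfolding SP_char by auto
      hence "\<Prod>Q > (0::nat)" by (rule prodP_pos)
      moreover have "\<Prod>Q \<le> N" using Q(1) unfolding SP_char by auto
      ultimately show "n \<in> {1..N}" using Q(2) by auto
    qed
  qed auto
  also have "\<dots> = harm N" by (simp add: harm_def divide_inverse)
  also have "\<dots> \<le> 1 + ln (real N)" using harm_le_ln N by blast
  finally show ?thesis .
qed

lemma finite_primes_le: "finite {p::nat. prime p \<and> p \<le> N}"
  by (rule finite_subset[of _ "{..N}"]) auto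

lemma base_sq_sum:
  assumes B: "B \<ge> 0"
  shows "(\<Sum>p\<in>{p::nat. prime p \<and> p \<le> N}. (B / real p) / real p) \<le> B"
proof (cases "N \<ge> 1")
  case True
  have "(\<Sum>p\<in>{p::nat. prime p \<and> p \<le> N}. 1 / real p ^ 2) \<le> (\<Sum>n\<in>{2..N}. 1 / real n ^ 2)"
  proof (rule sum_mono2)
    show "{p::nat. prime p \<and> p \<le> N} \<subseteq> {2..N}" using prime_ge_2_nat by auto
  qed auto
  also have "\<dots> \<le> 1"
  proof -
    have "0 \<le> 1 / real N" by simp
    thus ?thesis using inv_sq_sum[OF True] by linarith
  qed
  finally have s1: "(\<Sum>p\<in>{p::nat. prime p \<and> p \<le> N}. 1 / real p ^ 2) \<le> 1" .
  have "(\<Sum>p\<in>{p::nat. prime p \<and> p \<le> N}. (B / real p) / real p) = B * (\<Sum>p\<in>{p::nat. prime p \<and> p \<le> N}. 1 / real p ^ 2)"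
    unfolding sum_distrib_left by (intro sum.cong refl) (simp add: power2_eq_square)
  also have "\<dots> \<le> B * 1" using s1 B by (intro mult_left_mono) auto
  finally show ?thesis by simp
next
  case False
  hence "N = 0" by simp
  hence E: "{p::nat. prime p \<and> p \<le> N} = {}" by auto
  show ?thesis unfolding E using B by simp
qed

lemma base_bound:
  assumes B: "B \<ge> 0"
  shows "(\<Sum>P\<in>SP N. \<Prod>p\<in>P. (B / real p) / real p) \<le> exp B"
proof -
  define Pr where "Pr = {p::nat. prime p \<and> p \<le> N}"
  define c where "c p = (B / real p) / real p" for p :: nat
  have finPr: "finite Pr" unfolding Pr_def by (rule finite_primes_le)
  have c_nonneg: "0 \<le> c p" for p unfolding c_def using B by simp
  have sB: "(\<Sum>p\<in>Pr. c p) \<le> B" unfolding Pr_def c_def by (rule base_sq_sum[OF B])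
  have "(\<Sum>P\<in>SP N. \<Prod>p\<in>P. c p) \<le> (\<Sum>P\<in>Pow Pr. \<Prod>p\<in>P. c p)"
  proof (rule sum_mono2)
    show "finite (Pow Pr)" using finPr by simp
    show "SP N \<subseteq> Pow Pr" unfolding SP_def Pr_def by auto
    fix P assume "P \<in> Pow Pr - SP N"
    show "0 \<le> (\<Prod>p\<in>P. c p)" by (intro prod_nonneg) (rule c_nonneg)
  qed
  also have "(\<Sum>P\<in>Pow Pr. \<Prod>p\<in>P. c p) = (\<Prod>p\<in>Pr. c p + 1)"
  proof -
    have "(\<Prod>p\<in>Pr. c p + 1) = (\<Sum>X\<in>Pow Pr. (\<Prod>p\<in>X. c p) * (\<Prod>p\<in>Pr - X. 1))"
      by (rule prod_add[OF finPr])
    also have "\<dots> = (\<Sum>X\<in>Pow Pr. \<Prod>p\<in>X. c p)" by (intro sum.cong refl) simp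
    finally show ?thesis by simp
  qed
  also have "\<dots> \<le> (\<Prod>p\<in>Pr. exp (c p))"
  proof (intro prod_mono conjI)
    fix p
    show "0 \<le> c p + 1" using c_nonneg[of p] by linarith
    show "c p + 1 \<le> exp (c p)" using exp_ge_add_one_self[of "c p"] by linarith
  qed
  also have "\<dots> = exp (\<Sum>p\<in>Pr. c p)" using finPr by (simp add: exp_sum)
  also have "\<dots> \<le> exp B" using sB by simp
  finally show ?thesis unfolding c_def .
qed

lemma step_bound:
  assumes u: "\<And>p. 0 \<le> u p" and v: "\<And>p. 0 \<le> (v p :: real)"
  shows "(\<Sum>P\<in>SP N. \<Prod>p\<in>P. u p + v p) \<le> (\<Sum>Q\<in>SP N. \<Prod>p\<in>Q. u p) * (\<Sum>R\<in>SP N. \<Prod>p\<in>R. v p)"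
proof -
  have "(\<Sum>P\<in>SP N. \<Prod>p\<in>P. u p + v p) =
        (\<Sum>P\<in>SP N. \<Sum>X\<in>{X. X \<in> SP N \<and> X \<subseteq> P}. (\<Prod>p\<in>X. u p) * (\<Prod>p\<in>P - X. v p))"
  proof (intro sum.cong refl)
    fix P assume P: "P \<in> SP N"
    have "Pow P = {X. X \<in> SP N \<and> X \<subseteq> P}" using SP_subset[OF P] by auto
    thus "(\<Prod>p\<in>P. u p + v p) = (\<Sum>X\<in>{X. X \<in> SP N \<and> X \<subseteq> P}. (\<Prod>p\<in>X. u p) * (\<Prod>p\<in>P - X. v p))"
      using prod_add[OF SP_finite_elem[OF P], of u v] by simp
  qed
  also have "\<dots> = (\<Sum>X\<in>SP N. \<Sum>P\<in>{P. P \<in> SP N \<and> X \<subseteq> P}. (\<Prod>p\<in>X. u p) * (\<Prod>p\<in>P - X. v p))"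
    by (rule sum.swap_restrict) (auto simp: finite_SP)
  also have "\<dots> \<le> (\<Sum>X\<in>SP N. (\<Prod>p\<in>X. u p) * (\<Sum>R\<in>SP N. \<Prod>p\<in>R. v p))"
  proof (intro sum_mono)
    fix X assume X: "X \<in> SP N"
    define A where "A = {P. P \<in> SP N \<and> X \<subseteq> P}"
    have inj: "inj_on (\<lambda>P. P - X) A" unfolding A_def by (rule inj_onI) blast
    have "(\<Sum>P\<in>A. \<Prod>p\<in>P - X. v p) = (\<Sum>R\<in>(\<lambda>P. P - X) ` A. \<Prod>p\<in>R. v p)"
      using inj by (simp add: sum.reindex)
    also have "\<dots> \<le> (\<Sum>R\<in>SP N. \<Prod>p\<in>R. v p)"
    proof (rule sum_mono2[OF finite_SP])
      show "(\<lambda>P. P - X) ` A \<subseteq> SP N"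
      proof
        fix R assume "R \<in> (\<lambda>P. P - X) ` A"
        then obtain P where P: "P \<in> A" "R = P - X" by blast
        have "P \<in> SP N" using P(1) unfolding A_def by simp
        thus "R \<in> SP N" using SP_subset[of P N "P - X"] P(2) by blast
      qed
      fix R show "0 \<le> (\<Prod>p\<in>R. v p)" by (intro prod_nonneg) (use v in simp)
    qed
    finally have "(\<Sum>P\<in>A. \<Prod>p\<in>P - X. v p) \<le> (\<Sum>R\<in>SP N. \<Prod>p\<in>R. v p)" .
    hence "(\<Prod>p\<in>X. u p) * (\<Sum>P\<in>A. \<Prod>p\<in>P - X. v p) \<le> (\<Prod>p\<in>X. u p) * (\<Sum>R\<in>SP N. \<Prod>p\<in>R. v p)"
      by (intro mult_left_mono) (auto simp: u prod_nonneg)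
    thus "(\<Sum>P\<in>{P. P \<in> SP N \<and> X \<subseteq> P}. (\<Prod>p\<in>X. u p) * (\<Prod>p\<in>P - X. v p))
          \<le> (\<Prod>p\<in>X. u p) * (\<Sum>R\<in>SP N. \<Prod>p\<in>R. v p)"
      by (simp add: A_def sum_distrib_left)
  qed
  also have "\<dots> = (\<Sum>Q\<in>SP N. \<Prod>p\<in>Q. u p) * (\<Sum>R\<in>SP N. \<Prod>p\<in>R. v p)"
    by (simp add: sum_distrib_right)
  finally show ?thesis .
qed

lemma Hgen:
  assumes B: "B \<ge> 0"
  shows "\<exists>K\<ge>0. \<forall>N\<ge>1. (\<Sum>P\<in>SP N. \<Prod>p\<in>P. (real a + B / real p) / real p) \<le> K * (1 + ln (real N)) ^ a"
proof (induction a)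
  case 0
  show ?case using base_bound[OF B] by (intro exI[of _ "exp B"]) auto
next
  case (Suc a)
  then obtain K where K: "K \<ge> 0" "\<And>N. N \<ge> 1 \<Longrightarrow>
      (\<Sum>P\<in>SP N. \<Prod>p\<in>P. (real a + B / real p) / real p) \<le> K * (1 + ln (real N)) ^ a" by blast
  show ?case
  proof (intro exI[of _ K] conjI allI impI)
    fix N :: nat assume N: "N \<ge> 1"
    have lnN: "0 \<le> ln (real N)" using N by simp
    have "(\<Sum>P\<in>SP N. \<Prod>p\<in>P. (real (Suc a) + B / real p) / real p) =
          (\<Sum>P\<in>SP N. \<Prod>p\<in>P. 1 / real p + (real a + B / real p) / real p)"
      by (intro sum.cong prod.cong refl) (simp add: add_divide_distrib)
    also have "\<dots> \<le> (\<Sum>Q\<in>SP N. \<Prod>p\<in>Q. 1 / real p) * (\<Sum>R\<in>SP N. \<Prod>p\<in>R. (real a + B / real p) / real p)"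
      by (rule step_bound) (auto simp: B)
    also have "\<dots> \<le> (1 + ln (real N)) * (K * (1 + ln (real N)) ^ a)"
    proof (rule mult_mono)
      show "(\<Sum>Q\<in>SP N. \<Prod>p\<in>Q. 1 / real p) \<le> 1 + ln (real N)" by (rule sum_inv_prod_SP[OF N])
      show "(\<Sum>R\<in>SP N. \<Prod>p\<in>R. (real a + B / real p) / real p) \<le> K * (1 + ln (real N)) ^ a" by (rule K(2)[OF N])
      show "0 \<le> 1 + ln (real N)" using lnN by simp
      show "0 \<le> (\<Sum>R\<in>SP N. \<Prod>p\<in>R. (real a + B / real p) / real p)"
        by (intro sum_nonneg prod_nonneg) (auto simp: B)
    qed
    also have "\<dots> = K * (1 + ln (real N)) ^ Suc a" by simp
    finally show "(\<Sum>P\<in>SP N. \<Prod>p\<in>P. (real (Suc a) + B / real p) / real p) \<le> K * (1 + ln (real N)) ^ Suc a" .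
  qed (use K in auto)
qed

lemma Hbound:
  assumes r: "1 \<le> r"
  shows "\<exists>K\<ge>0. \<forall>y::real. y \<ge> 2 \<longrightarrow>
     (\<Sum>P\<in>SP (nat \<lfloor>y\<rfloor>). \<bar>Gs r e P\<bar>) \<le> K * ln y ^ nat \<bar>e 1\<bar>"
proof -
  define a where "a = nat \<bar>e 1\<bar>"
  have a: "real a = \<bar>real_of_int (e 1)\<bar>" unfolding a_def by simp
  obtain B where B: "B \<ge> 0" "\<And>p. prime p \<Longrightarrow> \<bar>phi r e p - 1 + real_of_int (e 1) / real p\<bar> \<le> B / real p ^ 2"
    using phi_near[OF r] by blast
  obtain K where K: "K \<ge> 0" "\<And>N. N \<ge> 1 \<Longrightarrow>
      (\<Sum>P\<in>SP N. \<Prod>p\<in>P. (real a + B / real p) / real p) \<le> K * (1 + ln (real N)) ^ a"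
    using Hgen[OF B(1)] by blast
  have Gb: "\<bar>Gs r e P\<bar> \<le> (\<Prod>p\<in>P. (real a + B / real p) / real p)" if P: "P \<in> SP N" for P N
  proof -
    have "\<bar>Gs r e P\<bar> = (\<Prod>p\<in>P. \<bar>phi r e p - 1\<bar>)" unfolding Gs_def by (simp add: abs_prod)
    also have "\<dots> \<le> (\<Prod>p\<in>P. (real a + B / real p) / real p)"
    proof (intro prod_mono conjI)
      fix p assume p: "p \<in> P"
      have pr: "prime p" using SP_prime[OF P p] .
      have p0: "real p > 0" using prime_gt_0_nat[OF pr] by simp
      have "\<bar>phi r e p - 1\<bar> \<le> \<bar>real_of_int (e 1) / real p\<bar> + B / real p ^ 2"
        using B(2)[OF pr] by linarith
      also have "\<dots> = (real a + B / real p) / real p" using p0 a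
        by (simp add: abs_divide field_simps power2_eq_square)
      finally show "\<bar>phi r e p - 1\<bar> \<le> (real a + B / real p) / real p" .
    qed auto
    finally show ?thesis .
  qed
  show ?thesis
  proof (intro exI[of _ "K * 3 ^ a"] conjI allI impI)
    show "0 \<le> K * 3 ^ a" using K by simp
    fix y :: real assume y: "y \<ge> 2"
    define N where "N = nat \<lfloor>y\<rfloor>"
    have N: "N \<ge> 1" "real N \<le> y" "real N \<ge> 1" using y unfolding N_def by linarith+
    have "ln 2 \<le> ln y" using y by simp
    hence lny: "ln y \<ge> 2/3" using ln2_ge_two_thirds by linarith
    have "(\<Sum>P\<in>SP N. \<bar>Gs r e P\<bar>) \<le> (\<Sum>P\<in>SP N. \<Prod>p\<in>P. (real a + B / real p) / real p)"
      by (intro sum_mono Gb)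
    also have "\<dots> \<le> K * (1 + ln (real N)) ^ a" using K(2)[OF N(1)] .
    also have "\<dots> \<le> K * (3 * ln y) ^ a"
    proof (intro mult_left_mono power_mono)
      have "ln (real N) \<le> ln y" using N by simp
      thus "1 + ln (real N) \<le> 3 * ln y" using lny by linarith
      show "0 \<le> 1 + ln (real N)" using N by simp
    qed (use K in auto)
    also have "\<dots> = K * 3 ^ a * ln y ^ a" by (simp add: power_mult_distrib)
    finally show "(\<Sum>P\<in>SP (nat \<lfloor>y\<rfloor>). \<bar>Gs r e P\<bar>) \<le> K * 3 ^ a * ln y ^ nat \<bar>e 1\<bar>"
      unfolding N_def a_def .
  qed
qed




lemma summable_poly_geom:
  assumes q: "0 \<le> q" "q < (1::real)"
  shows "summable (\<lambda>k. real (k+2) ^ a * q ^ k)"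
proof -
  define c where "c = (1 + q) / 2"
  have c: "c < 1" "q < c" using q unfolding c_def by auto
  have lim: "(\<lambda>n. q * ((real n + 3) / (real n + 2)) ^ a) \<longlonglongrightarrow> q * 1 ^ a"
  proof (intro tendsto_mult tendsto_const tendsto_power)
    show "(\<lambda>n. (real n + 3) / (real n + 2)) \<longlonglongrightarrow> 1" by real_asymp
  qed
  have "eventually (\<lambda>n. q * ((real n + 3) / (real n + 2)) ^ a < c) sequentially"
    using order_tendstoD(2)[OF lim] c by simp
  then obtain N where N: "\<And>n. n \<ge> N \<Longrightarrow> q * ((real n + 3) / (real n + 2)) ^ a < c"
    unfolding eventually_sequentially by blast
  show ?thesis
  proof (rule summable_ratio_test[OF c(1), of N])
    fix n assume n: "n \<ge> N"
    have pos: "real n + 2 > 0" by simp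
    have "norm (real (Suc n + 2) ^ a * q ^ Suc n) = q * ((real n + 3) / (real n + 2)) ^ a * (real (n + 2) ^ a * q ^ n)"
      using pos q by (simp add: power_divide field_simps)
    also have "\<dots> \<le> c * (real (n + 2) ^ a * q ^ n)"
      using N[OF n] q by (intro mult_right_mono) auto
    also have "\<dots> = c * norm (real (n + 2) ^ a * q ^ n)" using q by simp
    finally show "norm (real (Suc n + 2) ^ a * q ^ Suc n) \<le> c * norm (real (n + 2) ^ a * q ^ n)" .
  qed
qed

lemma gt_floor_SP:
  assumes "P \<in> SP M - SP (nat \<lfloor>x\<rfloor>)" "x \<ge> 0"
  shows "real (\<Prod>P) > x"
proof -
  have "\<not> \<Prod>P \<le> nat \<lfloor>x\<rfloor>" using assms SP_char by blast
  hence "\<Prod>P \<ge> nat \<lfloor>x\<rfloor> + 1" by simp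
  thus ?thesis using assms(2) by linarith
qed

lemma dyadic_tail:
  fixes g :: "nat set \<Rightarrow> real" and \<rho> :: "nat \<Rightarrow> real"
  assumes g0: "\<And>P. 0 \<le> g P"
    and HB: "\<And>y. y \<ge> 2 \<Longrightarrow> (\<Sum>P\<in>SP (nat \<lfloor>y\<rfloor>). g P) \<le> K * ln y ^ a"
    and K: "K \<ge> 0" and x: "x \<ge> 2" and q: "0 \<le> q" "q < 1" and Q: "Q \<ge> 0"
    and blk: "\<And>k d. 2^k * x < real d \<Longrightarrow> real d \<le> 2^(k+1) * x \<Longrightarrow> \<bar>\<rho> d\<bar> \<le> Q * q^k"
    and PP: "\<P> \<subseteq> SP M - SP (nat \<lfloor>x\<rfloor>)"
  shows "(\<Sum>P\<in>\<P>. g P * \<bar>\<rho> (\<Prod>P)\<bar>) \<le> K * Q * ln x ^ a * (\<Sum>k. real (k+2) ^ a * q ^ k)"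
proof -
  define \<kappa> where "\<kappa> P = (LEAST k. real (\<Prod>P) \<le> 2^(k+1) * x)" for P
  have finP: "finite \<P>" using PP finite_SP finite_subset by blast
  have lnx: "ln x \<ge> ln 2" using x by simp
  have ln2: "ln (2::real) > 0" by simp
  have blkP: "2^\<kappa> P * x < real (\<Prod>P) \<and> real (\<Prod>P) \<le> 2^(\<kappa> P + 1) * x" if P: "P \<in> \<P>" for P
  proof -
    have gt: "real (\<Prod>P) > x" using gt_floor_SP[of P M x] P PP x by auto
    obtain n where n: "real (\<Prod>P) / x < 2 ^ n" using real_arch_pow[of 2 "real (\<Prod>P) / x"] by auto
    have ex: "real (\<Prod>P) \<le> 2^(n+1) * x"
    proof -
      have "real (\<Prod>P) < 2^n * x" using n x by (simp add: divide_less_eq)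
      also have "\<dots> \<le> 2^(n+1) * x" using x by simp
      finally show ?thesis by simp
    qed
    have up: "real (\<Prod>P) \<le> 2^(\<kappa> P + 1) * x" unfolding \<kappa>_def by (rule LeastI[of _ n]) (rule ex)
    have lo: "2^\<kappa> P * x < real (\<Prod>P)"
    proof (cases "\<kappa> P")
      case 0 thus ?thesis using gt by simp
    next
      case (Suc j)
      have "\<not> real (\<Prod>P) \<le> 2^(j+1) * x"
        using not_less_Least[of j "\<lambda>k. real (\<Prod>P) \<le> 2^(k+1) * x"] Suc unfolding \<kappa>_def by simp
      thus ?thesis using Suc by simp
    qed
    show ?thesis using up lo by simp
  qed
  define h where "h k = real (k+2) ^ a * q ^ k" for k
  have h0: "0 \<le> h k" for k unfolding h_def using q by simp
  have "(\<Sum>P\<in>\<P>. g P * \<bar>\<rho> (\<Prod>P)\<bar>) \<le> (\<Sum>P\<in>\<P>. g P * (Q * q ^ \<kappa> P))"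
    using blkP blk g0 by (intro sum_mono mult_left_mono) auto
  also have "\<dots> = (\<Sum>k\<in>\<kappa> ` \<P>. \<Sum>P\<in>{P. P \<in> \<P> \<and> \<kappa> P = k}. g P * (Q * q ^ \<kappa> P))"
    by (rule sum.image_gen[OF finP])
  also have "\<dots> \<le> (\<Sum>k\<in>\<kappa> ` \<P>. K * Q * ln x ^ a * h k)"
  proof (intro sum_mono)
    fix k assume "k \<in> \<kappa> ` \<P>"
    define y where "y = 2^(k+1) * x"
    have "(1::real) \<le> 2^(k+1)" by (rule one_le_power) simp
    hence "1 * x \<le> 2^(k+1) * x" using x by (intro mult_right_mono) auto
    hence y2: "y \<ge> 2" unfolding y_def using x by linarith
    have eq1: "(\<Sum>P\<in>{P. P \<in> \<P> \<and> \<kappa> P = k}. g P * (Q * q ^ \<kappa> P)) = Q * q ^ k * (\<Sum>P\<in>{P. P \<in> \<P> \<and> \<kappa> P = k}. g P)"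
      by (simp add: sum_distrib_left mult_ac)
    have "(\<Sum>P\<in>{P. P \<in> \<P> \<and> \<kappa> P = k}. g P) \<le> (\<Sum>P\<in>SP (nat \<lfloor>y\<rfloor>). g P)"
    proof (rule sum_mono2[OF finite_SP])
      show "{P. P \<in> \<P> \<and> \<kappa> P = k} \<subseteq> SP (nat \<lfloor>y\<rfloor>)"
      proof
        fix P assume P: "P \<in> {P. P \<in> \<P> \<and> \<kappa> P = k}"
        have "real (\<Prod>P) \<le> y" using blkP[of P] P unfolding y_def by auto
        hence "\<Prod>P \<le> nat \<lfloor>y\<rfloor>" by (simp add: le_nat_floor)
        moreover have "P \<in> SP M" using P PP by auto
        ultimately show "P \<in> SP (nat \<lfloor>y\<rfloor>)" using SP_char by blast
      qed
    qed (use g0 in auto)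
    also have "\<dots> \<le> K * ln y ^ a" by (rule HB[OF y2])
    also have "\<dots> \<le> K * (real (k+2) * ln x) ^ a"
    proof (intro mult_left_mono power_mono)
      have "ln y = real (k+1) * ln 2 + ln x" unfolding y_def using x
        by (simp add: ln_mult ln_realpow algebra_simps)
      also have "\<dots> \<le> real (k+1) * ln x + ln x" using lnx by (intro add_right_mono mult_left_mono) auto
      finally show "ln y \<le> real (k+2) * ln x" by (simp add: algebra_simps)
      show "0 \<le> ln y" using y2 by simp
    qed (use K in auto)
    finally have "(\<Sum>P\<in>{P. P \<in> \<P> \<and> \<kappa> P = k}. g P) \<le> K * (real (k+2) * ln x) ^ a" .
    hence "Q * q ^ k * (\<Sum>P\<in>{P. P \<in> \<P> \<and> \<kappa> P = k}. g P) \<le> Q * q ^ k * (K * (real (k+2) * ln x) ^ a)"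
      using Q q by (intro mult_left_mono) auto
    hence "(\<Sum>P\<in>{P. P \<in> \<P> \<and> \<kappa> P = k}. g P * (Q * q ^ \<kappa> P)) \<le> Q * q ^ k * (K * (real (k+2) * ln x) ^ a)"
      using eq1 by simp
    also have "\<dots> = K * Q * ln x ^ a * h k" unfolding h_def by (simp add: power_mult_distrib mult_ac)
    finally show "(\<Sum>P\<in>{P. P \<in> \<P> \<and> \<kappa> P = k}. g P * (Q * q ^ \<kappa> P)) \<le> K * Q * ln x ^ a * h k" .
  qed
  also have "\<dots> = K * Q * ln x ^ a * (\<Sum>k\<in>\<kappa> ` \<P>. h k)" by (simp add: sum_distrib_left)
  also have "\<dots> \<le> K * Q * ln x ^ a * (\<Sum>k. h k)"
  proof (rule mult_left_mono)
    show "(\<Sum>k\<in>\<kappa> ` \<P>. h k) \<le> (\<Sum>k. h k)"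
      using sum_le_suminf[of h] summable_poly_geom[OF q, of a] h0 finP unfolding h_def by auto
    have "0 \<le> ln x" using x by simp
    thus "0 \<le> K * Q * ln x ^ a" using K Q by (intro mult_nonneg_nonneg zero_le_power) auto
  qed
  finally show ?thesis unfolding h_def .
qed




lemma lim_bound:
  fixes f :: "nat \<Rightarrow> real"
  assumes "f \<longlonglongrightarrow> L" "\<And>M. M \<ge> N \<Longrightarrow> \<bar>f M - f N\<bar> \<le> B"
  shows "\<bar>f N - L\<bar> \<le> B"
proof -
  have "(\<lambda>M. \<bar>f M - f N\<bar>) \<longlonglongrightarrow> \<bar>L - f N\<bar>"
    by (intro tendsto_intros assms(1))
  hence "\<bar>L - f N\<bar> \<le> B" by (rule LIMSEQ_le_const2) (use assms(2) in blast)
  thus ?thesis by linarith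
qed

lemma cauchy_lim:
  fixes f :: "nat \<Rightarrow> real"
  assumes bd: "\<And>N M. N \<ge> N0 \<Longrightarrow> M \<ge> N \<Longrightarrow> \<bar>f M - f N\<bar> \<le> b N" and b: "b \<longlonglongrightarrow> 0"
  shows "\<exists>L. f \<longlonglongrightarrow> L \<and> (\<forall>N\<ge>N0. \<bar>f N - L\<bar> \<le> b N)"
proof -
  have "Cauchy f"
  proof (rule CauchyI)
    fix e :: real assume e: "0 < e"
    have "eventually (\<lambda>N. b N < e / 2) sequentially" by (rule order_tendstoD(2)[OF b]) (use e in simp)
    then obtain N1 where N1: "\<And>N. N \<ge> N1 \<Longrightarrow> b N < e / 2" unfolding eventually_sequentially by blast
    define N2 where "N2 = max N1 N0"
    show "\<exists>M. \<forall>m\<ge>M. \<forall>n\<ge>M. norm (f m - f n) < e"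
    proof (intro exI allI impI)
      fix m n assume m: "m \<ge> N2" and n: "n \<ge> N2"
      have "\<bar>f m - f N2\<bar> \<le> b N2" "\<bar>f n - f N2\<bar> \<le> b N2" using bd m n unfolding N2_def by auto
      moreover have "b N2 < e / 2" using N1 unfolding N2_def by auto
      ultimately show "norm (f m - f n) < e" by simp
    qed
  qed
  hence "f \<longlonglongrightarrow> lim f" by (simp add: Cauchy_convergent_iff convergent_LIMSEQ_iff)
  thus ?thesis using lim_bound bd by blast
qed

lemma Mfun_deriv:
  assumes t: "t > 0"
  shows "(Mfun \<gamma> has_real_derivative t powr \<gamma>) (at t)"
proof (cases "\<gamma> = -1")
  case True
  have "Mfun \<gamma> = ln" using True by (auto simp: Mfun_def fun_eq_iff)
  thus ?thesis using DERIV_ln_divide[OF t] True t by (simp add: powr_neg_one)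
next
  case False
  have eq: "Mfun \<gamma> = (\<lambda>x. x powr (\<gamma> + 1) / (\<gamma> + 1))" using False by (auto simp: Mfun_def fun_eq_iff)
  have "((\<lambda>x. x powr (\<gamma> + 1) / (\<gamma> + 1)) has_real_derivative (\<gamma> + 1) * t powr (\<gamma> + 1 - 1) / (\<gamma> + 1)) (at t)"
    by (intro DERIV_cdivide has_real_derivative_powr t)
  moreover have "\<gamma> + 1 \<noteq> 0" using False by linarith
  ultimately show ?thesis unfolding eq by simp
qed

lemma pow_ratio:
  fixes \<eta> n s :: real
  assumes "0 < \<eta>" "n / 2 \<le> \<eta>" "\<eta> \<le> n"
  shows "\<eta> powr s \<le> 2 powr \<bar>s\<bar> * n powr s"
proof (cases "s \<ge> 0")
  case True
  have "\<eta> powr s \<le> n powr s" using assms True by (intro powr_mono2) auto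
  moreover have "1 \<le> 2 powr \<bar>s\<bar>" by (rule ge_one_powr_ge_zero) auto
  moreover have "0 \<le> n powr s" by simp
  ultimately show ?thesis by (smt (verit) mult_le_cancel_right1)
next
  case False
  have "\<eta> powr s \<le> (n / 2) powr s" using assms False by (intro powr_mono2') auto
  also have "\<dots> = n powr s / 2 powr s" using assms by (simp add: powr_divide)
  also have "\<dots> = 2 powr \<bar>s\<bar> * n powr s" using False by (simp add: powr_minus divide_inverse mult.commute)
  finally show ?thesis .
qed

lemma MVT_pow:
  fixes n :: nat
  assumes "n \<ge> 2"
  shows "\<exists>\<zeta>. real n - 1 < \<zeta> \<and> \<zeta> < real n \<and> real n powr \<gamma> - (real n - 1) powr \<gamma> = \<gamma> * \<zeta> powr (\<gamma> - 1)"
proof -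
  have "\<exists>z. real n - 1 < z \<and> z < real n \<and> real n powr \<gamma> - (real n - 1) powr \<gamma> = (real n - (real n - 1)) * (\<gamma> * z powr (\<gamma> - 1))"
    using assms by (intro MVT2) (auto intro!: has_real_derivative_powr)
  thus ?thesis by auto
qed

definition DD :: "real \<Rightarrow> nat \<Rightarrow> real" where
  "DD \<gamma> n = (\<Sum>m=1..n. real m powr \<gamma>) - Mfun \<gamma> (real n)"

lemma DD_step:
  fixes n :: nat
  assumes n: "n \<ge> 2"
  shows "\<bar>DD \<gamma> n - DD \<gamma> (n - 1)\<bar> \<le> \<bar>\<gamma>\<bar> * 2 powr \<bar>\<gamma> - 1\<bar> * real n powr (\<gamma> - 1)"
proof -
  have rn: "real (n - 1) = real n - 1" using n by simp
  have "{1..n} = insert n {1..n-1}" using n by auto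
  hence "DD \<gamma> n - DD \<gamma> (n - 1) = real n powr \<gamma> - (Mfun \<gamma> (real n) - Mfun \<gamma> (real n - 1))"
    unfolding DD_def rn using n by simp
  moreover obtain \<xi> where xi: "real n - 1 < \<xi>" "\<xi> < real n" "Mfun \<gamma> (real n) - Mfun \<gamma> (real n - 1) = (real n - (real n - 1)) * \<xi> powr \<gamma>"
    using MVT2[of "real n - 1" "real n" "Mfun \<gamma>" "\<lambda>t. t powr \<gamma>"] n Mfun_deriv by force
  moreover obtain \<eta> where eta: "\<xi> < \<eta>" "\<eta> < real n" "real n powr \<gamma> - \<xi> powr \<gamma> = (real n - \<xi>) * (\<gamma> * \<eta> powr (\<gamma> - 1))"
    using MVT2[of \<xi> "real n" "\<lambda>t. t powr \<gamma>" "\<lambda>t. \<gamma> * t powr (\<gamma> - 1)"] xi n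
    by (force intro!: has_real_derivative_powr)
  ultimately have "\<bar>DD \<gamma> n - DD \<gamma> (n - 1)\<bar> = (real n - \<xi>) * \<bar>\<gamma>\<bar> * \<eta> powr (\<gamma> - 1)"
    by (simp add: abs_mult)
  also have "\<dots> \<le> 1 * \<bar>\<gamma>\<bar> * \<eta> powr (\<gamma> - 1)" using xi by (intro mult_right_mono) auto
  also have "\<dots> \<le> \<bar>\<gamma>\<bar> * (2 powr \<bar>\<gamma> - 1\<bar> * real n powr (\<gamma> - 1))"
  proof -
    have "real n / 2 \<le> real n - 1" using n by simp
    hence "\<eta> powr (\<gamma> - 1) \<le> 2 powr \<bar>\<gamma> - 1\<bar> * real n powr (\<gamma> - 1)"
      using xi eta by (intro pow_ratio) auto
    hence "\<bar>\<gamma>\<bar> * \<eta> powr (\<gamma> - 1) \<le> \<bar>\<gamma>\<bar> * (2 powr \<bar>\<gamma> - 1\<bar> * real n powr (\<gamma> - 1))"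
      by (rule mult_left_mono) simp
    thus ?thesis by simp
  qed
  finally show ?thesis by (simp add: mult_ac)
qed

lemma DD_diff:
  assumes N: "N \<ge> 1" and M: "M \<ge> N"
  shows "\<bar>DD \<gamma> M - DD \<gamma> N\<bar> \<le> \<bar>\<gamma>\<bar> * 2 powr \<bar>\<gamma> - 1\<bar> * (\<Sum>n\<in>{N<..M}. real n powr (\<gamma> - 1))"
  using M
proof (induction M rule: dec_induct)
  case base thus ?case by simp
next
  case (step M)
  have "{N<..Suc M} = insert (Suc M) {N<..M}" using step by auto
  hence s: "(\<Sum>n\<in>{N<..Suc M}. real n powr (\<gamma> - 1)) = real (Suc M) powr (\<gamma> - 1) + (\<Sum>n\<in>{N<..M}. real n powr (\<gamma> - 1))"
    by simp
  have h1: "\<bar>DD \<gamma> (Suc M) - DD \<gamma> M\<bar> \<le> \<bar>\<gamma>\<bar> * 2 powr \<bar>\<gamma> - 1\<bar> * real (Suc M) powr (\<gamma> - 1)"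
    using DD_step[of "Suc M" \<gamma>] step N by simp
  have "\<bar>\<gamma>\<bar> * 2 powr \<bar>\<gamma> - 1\<bar> * (real (Suc M) powr (\<gamma> - 1) + (\<Sum>n\<in>{N<..M}. real n powr (\<gamma> - 1)))
     = \<bar>\<gamma>\<bar> * 2 powr \<bar>\<gamma> - 1\<bar> * real (Suc M) powr (\<gamma> - 1) + \<bar>\<gamma>\<bar> * 2 powr \<bar>\<gamma> - 1\<bar> * (\<Sum>n\<in>{N<..M}. real n powr (\<gamma> - 1))"
    by (rule distrib_left)
  thus ?case using h1 step.IH unfolding s by linarith
qed

lemma tele_neg:
  assumes g: "\<gamma> < 0" and N: "N \<ge> 1" and M: "M \<ge> N"
  shows "(\<Sum>n\<in>{N<..M}. real n powr (\<gamma> - 1)) \<le> (real N powr \<gamma> - real M powr \<gamma>) / (- \<gamma>)"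
  using M
proof (induction M rule: dec_induct)
  case base thus ?case by simp
next
  case (step M)
  have "{N<..Suc M} = insert (Suc M) {N<..M}" using step by auto
  hence s: "(\<Sum>n\<in>{N<..Suc M}. real n powr (\<gamma> - 1)) = real (Suc M) powr (\<gamma> - 1) + (\<Sum>n\<in>{N<..M}. real n powr (\<gamma> - 1))"
    by simp
  obtain \<zeta> where z: "real (Suc M) - 1 < \<zeta>" "\<zeta> < real (Suc M)"
     "real (Suc M) powr \<gamma> - (real (Suc M) - 1) powr \<gamma> = \<gamma> * \<zeta> powr (\<gamma> - 1)"
    using MVT_pow[of "Suc M" \<gamma>] step N by auto
  have "real (Suc M) powr (\<gamma> - 1) \<le> \<zeta> powr (\<gamma> - 1)"
    using z g step N by (intro powr_mono2') auto
  hence "real (Suc M) powr (\<gamma> - 1) \<le> (real M powr \<gamma> - real (Suc M) powr \<gamma>) / (- \<gamma>)"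
    using z g by (simp add: field_simps)
  thus ?case using step.IH unfolding s using g by (simp add: field_simps)
qed

lemma tele_pos:
  assumes g: "0 < \<gamma>" "\<gamma> < 1" and N: "N \<ge> 1"
  shows "(\<Sum>n\<in>{1<..N}. real n powr (\<gamma> - 1)) \<le> real N powr \<gamma> / \<gamma>"
proof -
  have "(\<Sum>n\<in>{1<..M}. real n powr (\<gamma> - 1)) \<le> (real M powr \<gamma> - 1) / \<gamma>" if "M \<ge> 1" for M
    using that
  proof (induction M rule: dec_induct)
    case base thus ?case by simp
  next
    case (step M)
    have "{1<..Suc M} = insert (Suc M) {1<..M}" using step by auto
    hence s: "(\<Sum>n\<in>{1<..Suc M}. real n powr (\<gamma> - 1)) = real (Suc M) powr (\<gamma> - 1) + (\<Sum>n\<in>{1<..M}. real n powr (\<gamma> - 1))"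
      by simp
    obtain \<zeta> where z: "real (Suc M) - 1 < \<zeta>" "\<zeta> < real (Suc M)"
       "real (Suc M) powr \<gamma> - (real (Suc M) - 1) powr \<gamma> = \<gamma> * \<zeta> powr (\<gamma> - 1)"
      using MVT_pow[of "Suc M" \<gamma>] step by auto
    have "real (Suc M) powr (\<gamma> - 1) \<le> \<zeta> powr (\<gamma> - 1)"
      using z g step by (intro powr_mono2') auto
    hence "real (Suc M) powr (\<gamma> - 1) \<le> (real (Suc M) powr \<gamma> - real M powr \<gamma>) / \<gamma>"
      using z g by (simp add: field_simps)
    thus ?case using step.IH unfolding s using g by (simp add: field_simps)
  qed
  from this[OF N] show ?thesis using g by (simp add: field_simps)
qed

lemma DD_bound:
  "\<exists>c A0. A0 \<ge> 0 \<and> (\<gamma> \<ge> 0 \<longrightarrow> c = 0) \<and> (\<forall>N\<ge>1. \<bar>DD \<gamma> N - c\<bar> \<le> A0 * real N powr \<gamma>)"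
proof (cases "\<gamma> < 0")
  case True
  define C where "C = 2 powr \<bar>\<gamma> - 1\<bar>"
  have C0: "C \<ge> 0" unfolding C_def using True by simp
  have bd: "\<bar>DD \<gamma> M - DD \<gamma> N\<bar> \<le> C * real N powr \<gamma>" if "N \<ge> 1" "M \<ge> N" for N M
  proof -
    have "\<bar>DD \<gamma> M - DD \<gamma> N\<bar> \<le> \<bar>\<gamma>\<bar> * 2 powr \<bar>\<gamma> - 1\<bar> * (\<Sum>n\<in>{N<..M}. real n powr (\<gamma> - 1))"
      by (rule DD_diff) (use that in auto)
    also have "\<dots> \<le> \<bar>\<gamma>\<bar> * 2 powr \<bar>\<gamma> - 1\<bar> * ((real N powr \<gamma> - real M powr \<gamma>) / (- \<gamma>))"
      by (intro mult_left_mono tele_neg True that) auto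
    also have "\<dots> \<le> \<bar>\<gamma>\<bar> * 2 powr \<bar>\<gamma> - 1\<bar> * (real N powr \<gamma> / (- \<gamma>))"
    proof (rule mult_left_mono)
      show "(real N powr \<gamma> - real M powr \<gamma>) / (- \<gamma>) \<le> real N powr \<gamma> / (- \<gamma>)"
        using True by (intro divide_right_mono) auto
      show "0 \<le> \<bar>\<gamma>\<bar> * 2 powr \<bar>\<gamma> - 1\<bar>" by simp
    qed
    also have "\<bar>\<gamma>\<bar> * 2 powr \<bar>\<gamma> - 1\<bar> * (real N powr \<gamma> / (- \<gamma>)) = C * real N powr \<gamma>"
      unfolding C_def using True by (simp add: abs_of_neg field_simps)
    finally show ?thesis .
  qed
  have "(\<lambda>N. C * real N powr \<gamma>) \<longlonglongrightarrow> C * 0"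
    by (intro tendsto_mult tendsto_const) (use True in real_asymp)
  then obtain c where c: "\<forall>N\<ge>1. \<bar>DD \<gamma> N - c\<bar> \<le> C * real N powr \<gamma>"
    using cauchy_lim[of 1 "DD \<gamma>" "\<lambda>N. C * real N powr \<gamma>"] bd by auto
  show ?thesis using c C0 True by (intro exI[of _ c] exI[of _ C]) auto
next
  case False
  define C where "C = \<bar>DD \<gamma> 1\<bar> + (\<bar>\<gamma>\<bar> + 1) * 2 powr \<bar>\<gamma> - 1\<bar>"
  have bd: "\<bar>DD \<gamma> N\<bar> \<le> C * real N powr \<gamma>" if N: "N \<ge> 1" for N
  proof -
    have N1: "real N powr \<gamma> \<ge> 1" using N False by (simp add: ge_one_powr_ge_zero)
    have "\<bar>DD \<gamma> N - DD \<gamma> 1\<bar> \<le> \<bar>\<gamma>\<bar> * 2 powr \<bar>\<gamma> - 1\<bar> * (\<Sum>n\<in>{1<..N}. real n powr (\<gamma> - 1))"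
      by (rule DD_diff) (use N in auto)
    also have "\<dots> \<le> (\<bar>\<gamma>\<bar> + 1) * 2 powr \<bar>\<gamma> - 1\<bar> * real N powr \<gamma>"
    proof (cases "\<gamma> \<ge> 1")
      case True
      have "(\<Sum>n\<in>{1<..N}. real n powr (\<gamma> - 1)) \<le> (\<Sum>n\<in>{1<..N}. real N powr (\<gamma> - 1))"
        using True by (intro sum_mono powr_mono2) auto
      also have "\<dots> = real (N - 1) * real N powr (\<gamma> - 1)" by simp
      also have "\<dots> \<le> real N * real N powr (\<gamma> - 1)" by (intro mult_right_mono) auto
      also have "\<dots> = real N powr \<gamma>" using N by (simp add: powr_diff)
      finally have s: "(\<Sum>n\<in>{1<..N}. real n powr (\<gamma> - 1)) \<le> real N powr \<gamma>" .
      have "\<bar>\<gamma>\<bar> * 2 powr \<bar>\<gamma> - 1\<bar> * (\<Sum>n\<in>{1<..N}. real n powr (\<gamma> - 1)) \<le> \<bar>\<gamma>\<bar> * 2 powr \<bar>\<gamma> - 1\<bar> * real N powr \<gamma>"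
        using s by (intro mult_left_mono) auto
      also have "\<dots> \<le> (\<bar>\<gamma>\<bar> + 1) * 2 powr \<bar>\<gamma> - 1\<bar> * real N powr \<gamma>"
        by (intro mult_right_mono) auto
      finally show ?thesis .
    next
      case False2: False
      show ?thesis
      proof (cases "\<gamma> = 0")
        case True thus ?thesis by simp
      next
        case False3: False
        have g: "0 < \<gamma>" "\<gamma> < 1" using False False2 False3 by auto
        have "\<bar>\<gamma>\<bar> * 2 powr \<bar>\<gamma> - 1\<bar> * (\<Sum>n\<in>{1<..N}. real n powr (\<gamma> - 1)) \<le> \<bar>\<gamma>\<bar> * 2 powr \<bar>\<gamma> - 1\<bar> * (real N powr \<gamma> / \<gamma>)"
          by (intro mult_left_mono tele_pos g N) auto
        also have "\<dots> = 2 powr \<bar>\<gamma> - 1\<bar> * real N powr \<gamma>" using g by simp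
        also have "\<dots> \<le> (\<bar>\<gamma>\<bar> + 1) * 2 powr \<bar>\<gamma> - 1\<bar> * real N powr \<gamma>"
          using g by (simp add: mult_right_mono)
        finally show ?thesis .
      qed
    qed
    finally have "\<bar>DD \<gamma> N - DD \<gamma> 1\<bar> \<le> (\<bar>\<gamma>\<bar> + 1) * 2 powr \<bar>\<gamma> - 1\<bar> * real N powr \<gamma>" .
    moreover have "\<bar>DD \<gamma> 1\<bar> \<le> \<bar>DD \<gamma> 1\<bar> * real N powr \<gamma>" using N1 by (simp add: mult_le_cancel_left1)
    ultimately have "\<bar>DD \<gamma> N\<bar> \<le> \<bar>DD \<gamma> 1\<bar> * real N powr \<gamma> + (\<bar>\<gamma>\<bar> + 1) * 2 powr \<bar>\<gamma> - 1\<bar> * real N powr \<gamma>"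
      by linarith
    thus ?thesis unfolding C_def distrib_right by linarith
  qed
  show ?thesis using bd False by (intro exI[of _ 0] exI[of _ C]) (auto simp: C_def)
qed

lemma EM:
  "\<exists>c A. A \<ge> 0 \<and> (\<gamma> \<ge> 0 \<longrightarrow> c = 0) \<and>
     (\<forall>y::real. y \<ge> 1 \<longrightarrow> \<bar>(\<Sum>m=1..nat \<lfloor>y\<rfloor>. real m powr \<gamma>) - Mfun \<gamma> y - c\<bar> \<le> A * y powr \<gamma>)"
proof -
  obtain c A0 where cA: "A0 \<ge> 0" "\<gamma> \<ge> 0 \<longrightarrow> c = 0" "\<And>N. N \<ge> 1 \<Longrightarrow> \<bar>DD \<gamma> N - c\<bar> \<le> A0 * real N powr \<gamma>"
    using DD_bound[of \<gamma>] by blast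
  show ?thesis
  proof -
    have A1: "0 \<le> (A0 + 1) * 2 powr \<bar>\<gamma>\<bar>" using cA by simp
    have M1: "\<forall>y::real. y \<ge> 1 \<longrightarrow> \<bar>(\<Sum>m=1..nat \<lfloor>y\<rfloor>. real m powr \<gamma>) - Mfun \<gamma> y - c\<bar> \<le> (A0 + 1) * 2 powr \<bar>\<gamma>\<bar> * y powr \<gamma>"
    proof (intro allI impI)
    fix y :: real assume y: "y \<ge> 1"
    define N where "N = nat \<lfloor>y\<rfloor>"
    have N: "N \<ge> 1" "real N \<le> y" "y < real N + 1" using y unfolding N_def by linarith+
    have N2: "y / 2 \<le> real N" using N by linarith
    have eq: "(\<Sum>m=1..N. real m powr \<gamma>) - Mfun \<gamma> y - c = (DD \<gamma> N - c) - (Mfun \<gamma> y - Mfun \<gamma> (real N))"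
      unfolding DD_def by simp
    have t1: "\<bar>DD \<gamma> N - c\<bar> \<le> A0 * (2 powr \<bar>\<gamma>\<bar> * y powr \<gamma>)"
    proof -
      have "\<bar>DD \<gamma> N - c\<bar> \<le> A0 * real N powr \<gamma>" using cA(3)[OF N(1)] .
      also have "\<dots> \<le> A0 * (2 powr \<bar>\<gamma>\<bar> * y powr \<gamma>)"
        using N N2 cA by (intro mult_left_mono pow_ratio) auto
      finally show ?thesis .
    qed
    have t2: "\<bar>Mfun \<gamma> y - Mfun \<gamma> (real N)\<bar> \<le> 2 powr \<bar>\<gamma>\<bar> * y powr \<gamma>"
    proof (cases "real N = y")
      case True thus ?thesis by simp
    next
      case False
      hence lt: "real N < y" using N by simp
      obtain \<xi> where xi: "real N < \<xi>" "\<xi> < y" "Mfun \<gamma> y - Mfun \<gamma> (real N) = (y - real N) * \<xi> powr \<gamma>"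
        using MVT2[of "real N" y "Mfun \<gamma>" "\<lambda>t. t powr \<gamma>"] lt N Mfun_deriv by force
      have "\<bar>Mfun \<gamma> y - Mfun \<gamma> (real N)\<bar> = (y - real N) * \<xi> powr \<gamma>" using xi lt by simp
      also have "\<dots> \<le> 1 * \<xi> powr \<gamma>" using N by (intro mult_right_mono) auto
      also have "\<dots> \<le> 2 powr \<bar>\<gamma>\<bar> * y powr \<gamma>" using xi N N2 by (simp add: pow_ratio)
      finally show ?thesis .
    qed
    have "\<bar>(\<Sum>m=1..N. real m powr \<gamma>) - Mfun \<gamma> y - c\<bar> \<le> A0 * (2 powr \<bar>\<gamma>\<bar> * y powr \<gamma>) + 2 powr \<bar>\<gamma>\<bar> * y powr \<gamma>"
      unfolding eq using t1 t2 by linarith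
    also have "\<dots> = (A0 + 1) * 2 powr \<bar>\<gamma>\<bar> * y powr \<gamma>" by (simp add: algebra_simps)
    finally show "\<bar>(\<Sum>m=1..nat \<lfloor>y\<rfloor>. real m powr \<gamma>) - Mfun \<gamma> y - c\<bar> \<le> (A0 + 1) * 2 powr \<bar>\<gamma>\<bar> * y powr \<gamma>"
      unfolding N_def .
    qed
    show ?thesis using A1 M1 cA(2) by blast
  qed
qed




lemma tail_diff:
  fixes \<rho> :: "nat \<Rightarrow> real"
  assumes HB: "\<And>y. y \<ge> 2 \<Longrightarrow> (\<Sum>P\<in>SP (nat \<lfloor>y\<rfloor>). \<bar>Gs r e P\<bar>) \<le> K * ln y ^ a"
    and K: "K \<ge> 0" and x: "x \<ge> 2" and q: "0 \<le> q" "q < 1" and Q: "Q \<ge> 0"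
    and blk: "\<And>k d. 2^k * x < real d \<Longrightarrow> real d \<le> 2^(k+1) * x \<Longrightarrow> \<bar>\<rho> d\<bar> \<le> Q * q^k"
    and M: "M \<ge> nat \<lfloor>x\<rfloor>"
  shows "\<bar>(\<Sum>P\<in>SP M. Gs r e P * \<rho> (\<Prod>P)) - (\<Sum>P\<in>SP (nat \<lfloor>x\<rfloor>). Gs r e P * \<rho> (\<Prod>P))\<bar>
         \<le> K * Q * ln x ^ a * (\<Sum>k. real (k+2) ^ a * q ^ k)"
proof -
  have sub: "SP (nat \<lfloor>x\<rfloor>) \<subseteq> SP M" by (rule SP_mono[OF M])
  have "(\<Sum>P\<in>SP M. Gs r e P * \<rho> (\<Prod>P)) = (\<Sum>P\<in>SP M - SP (nat \<lfloor>x\<rfloor>). Gs r e P * \<rho> (\<Prod>P)) + (\<Sum>P\<in>SP (nat \<lfloor>x\<rfloor>). Gs r e P * \<rho> (\<Prod>P))"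
    by (rule sum.subset_diff[OF sub finite_SP])
  hence "\<bar>(\<Sum>P\<in>SP M. Gs r e P * \<rho> (\<Prod>P)) - (\<Sum>P\<in>SP (nat \<lfloor>x\<rfloor>). Gs r e P * \<rho> (\<Prod>P))\<bar>
      = \<bar>\<Sum>P\<in>SP M - SP (nat \<lfloor>x\<rfloor>). Gs r e P * \<rho> (\<Prod>P)\<bar>" by simp
  also have "\<dots> \<le> (\<Sum>P\<in>SP M - SP (nat \<lfloor>x\<rfloor>). \<bar>Gs r e P\<bar> * \<bar>\<rho> (\<Prod>P)\<bar>)"
    by (rule order.trans[OF sum_abs]) (simp add: abs_mult)
  also have "\<dots> \<le> K * Q * ln x ^ a * (\<Sum>k. real (k+2) ^ a * q ^ k)"
    by (rule dyadic_tail[where g = "\<lambda>P. \<bar>Gs r e P\<bar>" and \<rho> = \<rho>]) (use HB K x q Q blk in auto)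
  finally show ?thesis .
qed

lemma prod_phi_expand:
  "(\<Prod>p\<in>prime_factors n. phi r e p) = (\<Sum>P\<in>Pow (prime_factors n). Gs r e P)"
proof -
  have "(\<Prod>p\<in>prime_factors n. phi r e p) = (\<Prod>p\<in>prime_factors n. (phi r e p - 1) + 1)" by simp
  also have "\<dots> = (\<Sum>X\<in>Pow (prime_factors n). (\<Prod>p\<in>X. phi r e p - 1) * (\<Prod>p\<in>prime_factors n - X. 1))"
    by (rule prod_add) simp
  also have "\<dots> = (\<Sum>P\<in>Pow (prime_factors n). Gs r e P)" unfolding Gs_def by simp
  finally show ?thesis .
qed

lemma conv_identity:
  assumes N: "N \<ge> 1"
  shows "(\<Sum>n=1..N. jordan_quot r e n * real n powr \<beta>) =
     (\<Sum>P\<in>SP N. Gs r e P * (\<Sum>m=1..N div \<Prod>P. real (\<Prod>P * m) powr (\<beta> + real_of_int (weight r e))))"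
proof -
  define \<gamma> where "\<gamma> = \<beta> + real_of_int (weight r e)"
  have "(\<Sum>n=1..N. jordan_quot r e n * real n powr \<beta>) = (\<Sum>n\<in>{1..N}. \<Sum>P\<in>{P. P \<in> SP N \<and> P \<subseteq> prime_factors n}. real n powr \<gamma> * Gs r e P)"
  proof (intro sum.cong refl)
    fix n assume n: "n \<in> {1..N}"
    have "Pow (prime_factors n) = {P. P \<in> SP N \<and> P \<subseteq> prime_factors n}"
    proof (intro equalityI subsetI)
      fix P assume P: "P \<in> Pow (prime_factors n)"
      have fin: "finite P" using P by (auto intro: finite_subset)
      have pr: "\<forall>p\<in>P. prime p" using P by (auto simp: in_prime_factors_iff)
      have "\<Prod>P dvd n" using subset_pf_iff[of n P] n fin pr P by auto
      hence "\<Prod>P \<le> n" using n by (intro dvd_imp_le) auto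
      hence "\<Prod>P \<le> N" using n by auto
      thus "P \<in> {P. P \<in> SP N \<and> P \<subseteq> prime_factors n}" using fin pr P SP_char by auto
    qed auto
    hence "(\<Sum>P\<in>Pow (prime_factors n). Gs r e P) = (\<Sum>P\<in>{P. P \<in> SP N \<and> P \<subseteq> prime_factors n}. Gs r e P)"
      by simp
    moreover have "jordan_quot r e n * real n powr \<beta> = real n powr \<gamma> * (\<Sum>P\<in>Pow (prime_factors n). Gs r e P)"
      using jq_eq[of n r e \<beta>] n prod_phi_expand[of r e n] unfolding \<gamma>_def by simp
    ultimately show "jordan_quot r e n * real n powr \<beta> = (\<Sum>P\<in>{P. P \<in> SP N \<and> P \<subseteq> prime_factors n}. real n powr \<gamma> * Gs r e P)"
      by (simp add: sum_distrib_left)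
  qed
  also have "\<dots> = (\<Sum>P\<in>SP N. \<Sum>n\<in>{n. n \<in> {1..N} \<and> P \<subseteq> prime_factors n}. real n powr \<gamma> * Gs r e P)"
    by (rule sum.swap_restrict) (auto simp: finite_SP)
  also have "\<dots> = (\<Sum>P\<in>SP N. Gs r e P * (\<Sum>m=1..N div \<Prod>P. real (\<Prod>P * m) powr \<gamma>))"
  proof (intro sum.cong refl)
    fix P assume P: "P \<in> SP N"
    define d where "d = \<Prod>P"
    have fin: "finite P" and pr: "\<forall>p\<in>P. prime p" using P SP_char by auto
    have d0: "d > 0" unfolding d_def using prodP_pos fin pr by blast
    have set_eq: "{n. n \<in> {1..N} \<and> P \<subseteq> prime_factors n} = (\<lambda>m. d * m) ` {1..N div d}"
    proof (intro equalityI subsetI)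
      fix n assume "n \<in> {n. n \<in> {1..N} \<and> P \<subseteq> prime_factors n}"
      hence n: "1 \<le> n" "n \<le> N" "P \<subseteq> prime_factors n" by auto
      have "d dvd n" using subset_pf_iff[of n P] n fin pr unfolding d_def by auto
      then obtain m where m: "n = d * m" by (auto elim: dvdE)
      have "m \<ge> 1" using n m by (cases m) auto
      moreover have "m \<le> N div d" using n m d0 by (simp add: less_eq_div_iff_mult_less_eq mult.commute)
      ultimately show "n \<in> (\<lambda>m. d * m) ` {1..N div d}" using m by auto
    next
      fix n assume "n \<in> (\<lambda>m. d * m) ` {1..N div d}"
      then obtain m where mm: "m \<in> {1..N div d}" "n = d * m" by (rule imageE)
      hence m: "n = d * m" "1 \<le> m" "m \<le> N div d" by auto
      have "n \<le> d * (N div d)" using m by simp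
      also have "\<dots> \<le> N" by simp
      finally have "n \<le> N" .
      moreover have n1: "n \<ge> 1" using m d0 by (simp add: Suc_le_eq)
      moreover have "P \<subseteq> prime_factors n"
      proof -
        have "d dvd n" using m by simp
        thus ?thesis using subset_pf_iff[of n P] fin pr n1 unfolding d_def by simp
      qed
      ultimately show "n \<in> {n. n \<in> {1..N} \<and> P \<subseteq> prime_factors n}" by auto
    qed
    have inj: "inj_on (\<lambda>m. d * m) {1..N div d}" using d0 by (intro inj_onI) auto
    have "(\<Sum>n\<in>{n. n \<in> {1..N} \<and> P \<subseteq> prime_factors n}. real n powr \<gamma> * Gs r e P)
        = (\<Sum>m\<in>{1..N div d}. real (d * m) powr \<gamma> * Gs r e P)"
      by (rule sum.reindex_cong[OF inj set_eq]) simp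
    also have "\<dots> = Gs r e P * (\<Sum>m=1..N div d. real (d * m) powr \<gamma>)"
      by (simp add: sum_distrib_left mult.commute)
    finally show "(\<Sum>n\<in>{n. n \<in> {1..N} \<and> P \<subseteq> prime_factors n}. real n powr \<gamma> * Gs r e P) = Gs r e P * (\<Sum>m=1..N div \<Prod>P. real (\<Prod>P * m) powr \<gamma>)"
      unfolding d_def .
  qed
  finally show ?thesis unfolding \<gamma>_def .
qed

lemma ln_le_2sqrt: "t > 0 \<Longrightarrow> ln t \<le> 2 * sqrt (t::real)"
proof -
  assume t: "t > 0"
  have "ln (sqrt t) \<le> sqrt t - 1" using t by (intro ln_le_minus_one) simp
  moreover have "ln (sqrt t) = ln t / 2" using t by (simp add: ln_sqrt)
  ultimately show ?thesis by simp
qed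

lemma blk_a: assumes x: "x \<ge> 2" "2^k * x < real d"
  shows "\<bar>1 / real d\<bar> \<le> (1 / x) * (1/2)^k"
proof -
  have pos: "0 < 2^k * x" using x by simp
  have le: "2^k * x \<le> real d" using x by simp
  have "1 / real d \<le> 1 / (2^k * x)" by (rule frac_le[OF _ _ pos le]) auto
  moreover have "(1 / x) * (1/2)^k = 1 / (2^k * x)" by (simp add: power_one_over)
  moreover have "0 \<le> 1 / real d" by simp
  ultimately show ?thesis by simp
qed

lemma blk_b: assumes g: "\<gamma> < 0" and x: "x \<ge> 2" "2^k * x < real d"
  shows "\<bar>real d powr \<gamma>\<bar> \<le> x powr \<gamma> * (2 powr \<gamma>)^k"
proof -
  have pos: "0 < 2^k * x" using x by simp
  have "real d powr \<gamma> \<le> (2^k * x) powr \<gamma>" using pos x g by (intro powr_mono2') auto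
  also have "\<dots> = (2^k) powr \<gamma> * x powr \<gamma>" by (rule powr_mult)
  also have "(2::real)^k = 2 powr real k" by (simp add: powr_realpow)
  also have "(2 powr real k) powr \<gamma> = (2 powr \<gamma>)^k" by (simp add: powr_powr powr_power mult.commute)
  finally show ?thesis by (simp add: mult.commute)
qed

lemma blk_c: assumes x: "x \<ge> 2" "2^k * x < real d"
  shows "\<bar>ln (real d) / real d\<bar> \<le> (2 / sqrt x) * (1 / sqrt 2)^k"
proof -
  have pos: "0 < 2^k * x" using x by simp
  have "1 * x \<le> 2^k * x" using x by (intro mult_right_mono) auto
  hence d: "real d > 2" using x by linarith
  have lnd: "0 \<le> ln (real d)" using d by simp
  have "\<bar>ln (real d) / real d\<bar> = ln (real d) / real d" using lnd d by simp
  also have "\<dots> \<le> 2 * sqrt (real d) / real d" using d ln_le_2sqrt[of "real d"] by (intro divide_right_mono) auto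
  also have "\<dots> = 2 / sqrt (real d)" using d by (simp add: field_simps real_sqrt_mult[symmetric])
  also have "\<dots> \<le> 2 / sqrt (2^k * x)" using pos x d by (intro divide_left_mono real_sqrt_le_mono mult_pos_pos) auto
  also have "\<dots> = (2 / sqrt x) * (1 / sqrt 2)^k" using x
    by (simp add: real_sqrt_mult real_sqrt_power power_one_over field_simps)
  finally show ?thesis .
qed

lemma blk_d: assumes x: "x \<ge> 2" "2^k * x < real d"
  shows "\<bar>ln (real d / x) / real d\<bar> \<le> (2 / x) * (1 / sqrt 2)^k"
proof -
  have pos: "0 < 2^k * x" using x by simp
  have k1: "(1::real) \<le> 2^k" by simp
  have "1 * x \<le> 2^k * x" using x k1 by (intro mult_right_mono) auto
  hence dgt: "real d > x" using x by linarith
  hence dx: "real d / x > 1" using x by (simp add: field_simps)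
  have d: "real d > 0" using dgt x by linarith
  have lnd: "0 \<le> ln (real d / x)" using dx by simp
  have "\<bar>ln (real d / x) / real d\<bar> = ln (real d / x) / real d" using lnd d by simp
  also have "\<dots> \<le> 2 * sqrt (real d / x) / real d" using d dx ln_le_2sqrt[of "real d / x"] by (intro divide_right_mono) auto
  also have "\<dots> = 2 * (sqrt (real d) / sqrt x) / (sqrt (real d) * sqrt (real d))"
    using d by (simp add: real_sqrt_divide)
  also have "\<dots> = 2 / (sqrt (real d) * sqrt x)" using d x by (simp add: field_simps)
  also have "\<dots> \<le> 2 / (sqrt (2^k * x) * sqrt x)" using pos x d
    by (intro divide_left_mono mult_right_mono real_sqrt_le_mono mult_pos_pos) auto
  also have "\<dots> = (2 / x) * (1 / sqrt 2)^k" using x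
    by (simp add: real_sqrt_mult real_sqrt_power power_one_over field_simps)
  finally show ?thesis .
qed




theorem mainTheorem5:
  fixes r :: nat and e :: "nat \<Rightarrow> int" and \<beta> :: real
  assumes "1 \<le> r"
  shows "\<exists>C K. \<forall>x::real. x \<ge> 2 \<longrightarrow>
     \<bar>(\<Sum>n=1..nat \<lfloor>x\<rfloor>. jordan_quot r e n * real n powr \<beta>)
        - sing_series r e * Mfun (\<beta> + real_of_int (weight r e)) x - C\<bar>
     \<le> K * x powr (\<beta> + real_of_int (weight r e)) * ln x ^ nat \<bar>e 1\<bar>"
proof -
  define \<gamma> where "\<gamma> = \<beta> + real_of_int (weight r e)"
  define a where "a = nat \<bar>e 1\<bar>"
  obtain KH where KH: "KH \<ge> 0" "\<And>y. y \<ge> 2 \<Longrightarrow> (\<Sum>P\<in>SP (nat \<lfloor>y\<rfloor>). \<bar>Gs r e P\<bar>) \<le> KH * ln y ^ a"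
    using Hbound[OF assms, of e] unfolding a_def by blast
  obtain c A where cA: "A \<ge> 0" "\<gamma> \<ge> 0 \<longrightarrow> c = 0"
    "\<And>y. y \<ge> 1 \<Longrightarrow> \<bar>(\<Sum>m=1..nat \<lfloor>y\<rfloor>. real m powr \<gamma>) - Mfun \<gamma> y - c\<bar> \<le> A * y powr \<gamma>"
    using EM[of \<gamma>] by blast
  define S where "S q = (\<Sum>k. real (k+2) ^ a * q ^ k)" for q :: real
  have S0: "S q \<ge> 0" if "0 \<le> q" "q < 1" for q
    unfolding S_def using summable_poly_geom[OF that, of a] that by (intro suminf_nonneg) auto
  define V where "V \<rho> N = (\<Sum>P\<in>SP N. Gs r e P * \<rho> (\<Prod>P))" for \<rho> :: "nat \<Rightarrow> real" and N
  have td: "\<bar>V \<rho> M - V \<rho> (nat \<lfloor>x\<rfloor>)\<bar> \<le> KH * Q * ln x ^ a * S q"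
    if "x \<ge> 2" "0 \<le> q" "q < 1" "Q \<ge> 0" "M \<ge> nat \<lfloor>x\<rfloor>"
       "\<And>k d. 2^k * x < real d \<Longrightarrow> \<bar>\<rho> d\<bar> \<le> Q * q^k" for x q Q M \<rho>
    unfolding V_def S_def by (rule tail_diff[OF KH(2) KH(1)]) (use that in auto)
  have conv: "\<exists>L. V \<rho> \<longlonglongrightarrow> L \<and> (\<forall>x\<ge>2. \<bar>V \<rho> (nat \<lfloor>x\<rfloor>) - L\<bar> \<le> KH * Q x * ln x ^ a * S q)"
    if q: "0 \<le> q" "q < 1" and Q: "\<And>x. x \<ge> 2 \<Longrightarrow> Q x \<ge> 0"
      and blk: "\<And>x k d. x \<ge> 2 \<Longrightarrow> 2^k * x < real d \<Longrightarrow> \<bar>\<rho> d\<bar> \<le> Q x * q^k"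
      and lim0: "(\<lambda>N. Q (real N) * ln (real N) ^ a) \<longlonglongrightarrow> 0"
    for \<rho> Q q
  proof -
    have td': "\<bar>V \<rho> M - V \<rho> (nat \<lfloor>x\<rfloor>)\<bar> \<le> KH * Q x * ln x ^ a * S q" if "x \<ge> 2" "M \<ge> nat \<lfloor>x\<rfloor>" for x M
      by (rule td) (use that q Q blk in auto)
    have lim1: "(\<lambda>N. KH * Q (real N) * ln (real N) ^ a * S q) \<longlonglongrightarrow> 0"
    proof -
      have "(\<lambda>N. KH * (Q (real N) * ln (real N) ^ a) * S q) \<longlonglongrightarrow> KH * 0 * S q"
        by (intro tendsto_mult tendsto_const lim0)
      thus ?thesis by (simp add: mult.assoc)
    qed
    have "\<exists>L. V \<rho> \<longlonglongrightarrow> L \<and> (\<forall>N\<ge>2. \<bar>V \<rho> N - L\<bar> \<le> KH * Q (real N) * ln (real N) ^ a * S q)"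
    proof (rule cauchy_lim[OF _ lim1])
      fix N M :: nat assume NM: "N \<ge> 2" "M \<ge> N"
      show "\<bar>V \<rho> M - V \<rho> N\<bar> \<le> KH * Q (real N) * ln (real N) ^ a * S q"
        using td'[of "real N" M] NM by simp
    qed
    then obtain L where L: "V \<rho> \<longlonglongrightarrow> L" by blast
    have "\<bar>V \<rho> (nat \<lfloor>x\<rfloor>) - L\<bar> \<le> KH * Q x * ln x ^ a * S q" if "x \<ge> 2" for x
      by (rule lim_bound[OF L]) (rule td'[OF that])
    thus ?thesis using L by blast
  qed
  have half: "0 \<le> (1/2::real)" "(1/2::real) < 1" by auto
  have s2: "0 \<le> 1 / sqrt (2::real)" "1 / sqrt (2::real) < 1" by auto
  obtain Ga where Ga: "V (\<lambda>d. 1 / real d) \<longlonglongrightarrow> Ga"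
    "\<And>x. x \<ge> 2 \<Longrightarrow> \<bar>V (\<lambda>d. 1 / real d) (nat \<lfloor>x\<rfloor>) - Ga\<bar> \<le> KH * (1 / x) * ln x ^ a * S (1/2)"
  proof -
    have "\<exists>L. V (\<lambda>d. 1 / real d) \<longlonglongrightarrow> L \<and> (\<forall>x\<ge>2. \<bar>V (\<lambda>d. 1 / real d) (nat \<lfloor>x\<rfloor>) - L\<bar> \<le> KH * (1 / x) * ln x ^ a * S (1/2))"
    proof (rule conv[where Q = "\<lambda>x. 1 / x"])
      show "\<And>x k d. x \<ge> 2 \<Longrightarrow> 2^k * x < real d \<Longrightarrow> \<bar>1 / real d\<bar> \<le> 1 / x * (1/2)^k"
        by (rule blk_a)
      show "(\<lambda>N. 1 / real N * ln (real N) ^ a) \<longlonglongrightarrow> 0" by real_asymp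
    qed (use half in auto)
    thus thesis using that by blast
  qed
  obtain Lc where Lc: "V (\<lambda>d. ln (real d) / real d) \<longlonglongrightarrow> Lc"
  proof -
    have "\<exists>L. V (\<lambda>d. ln (real d) / real d) \<longlonglongrightarrow> L \<and> (\<forall>x\<ge>2. \<bar>V (\<lambda>d. ln (real d) / real d) (nat \<lfloor>x\<rfloor>) - L\<bar> \<le> KH * (2 / sqrt x) * ln x ^ a * S (1 / sqrt 2))"
    proof (rule conv[where Q = "\<lambda>x. 2 / sqrt x"])
      show "\<And>x k d. x \<ge> 2 \<Longrightarrow> 2^k * x < real d \<Longrightarrow> \<bar>ln (real d) / real d\<bar> \<le> 2 / sqrt x * (1 / sqrt 2)^k"
        by (rule blk_c)
      show "(\<lambda>N. 2 / sqrt (real N) * ln (real N) ^ a) \<longlonglongrightarrow> 0" by real_asymp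
    qed (use s2 in auto)
    thus thesis using that by blast
  qed
  obtain Cb where Cb: "\<And>x. x \<ge> 2 \<Longrightarrow> \<bar>c * V (\<lambda>d. real d powr \<gamma>) (nat \<lfloor>x\<rfloor>) - Cb\<bar> \<le> \<bar>c\<bar> * KH * S (2 powr \<gamma>) * (x powr \<gamma> * ln x ^ a)"
  proof (cases "\<gamma> < 0")
    case True
    have q: "0 \<le> 2 powr \<gamma>" "2 powr \<gamma> < 1" using True by (auto intro: powr_less_one)
    have "\<exists>L. V (\<lambda>d. real d powr \<gamma>) \<longlonglongrightarrow> L \<and> (\<forall>x\<ge>2. \<bar>V (\<lambda>d. real d powr \<gamma>) (nat \<lfloor>x\<rfloor>) - L\<bar> \<le> KH * (x powr \<gamma>) * ln x ^ a * S (2 powr \<gamma>))"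
    proof (rule conv[where Q = "\<lambda>x. x powr \<gamma>"])
      show "\<And>x k d. x \<ge> 2 \<Longrightarrow> 2^k * x < real d \<Longrightarrow> \<bar>real d powr \<gamma>\<bar> \<le> x powr \<gamma> * (2 powr \<gamma>)^k"
        by (rule blk_b[OF True])
      show "(\<lambda>N. real N powr \<gamma> * ln (real N) ^ a) \<longlonglongrightarrow> 0" using True by real_asymp
    qed (use q in auto)
    then obtain Lb where Lb: "\<And>x. x \<ge> 2 \<Longrightarrow> \<bar>V (\<lambda>d. real d powr \<gamma>) (nat \<lfloor>x\<rfloor>) - Lb\<bar> \<le> KH * (x powr \<gamma>) * ln x ^ a * S (2 powr \<gamma>)"
      by blast
    show thesis
    proof (rule that[of "c * Lb"])
      fix x :: real assume x: "x \<ge> 2"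
      have "\<bar>c * V (\<lambda>d. real d powr \<gamma>) (nat \<lfloor>x\<rfloor>) - c * Lb\<bar> = \<bar>c\<bar> * \<bar>V (\<lambda>d. real d powr \<gamma>) (nat \<lfloor>x\<rfloor>) - Lb\<bar>"
        by (simp add: abs_mult right_diff_distrib[symmetric])
      also have "\<dots> \<le> \<bar>c\<bar> * (KH * (x powr \<gamma>) * ln x ^ a * S (2 powr \<gamma>))"
        by (intro mult_left_mono Lb x) simp
      finally show "\<bar>c * V (\<lambda>d. real d powr \<gamma>) (nat \<lfloor>x\<rfloor>) - c * Lb\<bar> \<le> \<bar>c\<bar> * KH * S (2 powr \<gamma>) * (x powr \<gamma> * ln x ^ a)"
        by (simp add: mult_ac)
    qed
  next
    case False
    hence "c = 0" using cA(2) by simp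
    thus thesis by (intro that[of 0]) simp
  qed
  have sing: "sing_series r e = Ga"
  proof -
    define Pr where "Pr N = {p::nat. prime p \<and> p \<le> N}" for N
    define U where "U N = (\<Prod>p\<in>Pr N. 1 + (jordan_quot r e p * real p powr (- real_of_int (weight r e)) - 1) / real p)" for N
    have finPr: "finite (Pr N)" for N unfolding Pr_def by (rule finite_primes_le)
    have U_eq: "U N = (\<Sum>P\<in>Pow (Pr N). Gs r e P * (1 / real (\<Prod>P)))" for N
    proof -
      have phi_eq: "jordan_quot r e p * real p powr (- real_of_int (weight r e)) = phi r e p" if "prime p" for p
        using jq_eq[of p r e "- real_of_int (weight r e)"] that prime_prime_factors[OF that] prime_gt_0_nat[OF that]
        by simp
      have "U N = (\<Prod>p\<in>Pr N. (phi r e p - 1) / real p + 1)"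
        unfolding U_def by (intro prod.cong refl) (auto simp: Pr_def phi_eq)
      also have "\<dots> = (\<Sum>X\<in>Pow (Pr N). (\<Prod>p\<in>X. (phi r e p - 1) / real p) * (\<Prod>p\<in>Pr N - X. 1))"
        by (rule prod_add[OF finPr])
      also have "\<dots> = (\<Sum>P\<in>Pow (Pr N). Gs r e P * (1 / real (\<Prod>P)))"
      proof (intro sum.cong refl)
        fix P assume "P \<in> Pow (Pr N)"
        have "(\<Prod>p\<in>P. (phi r e p - 1) / real p) = Gs r e P * (1 / real (\<Prod>P))"
          unfolding Gs_def prod_dividef by simp
        thus "(\<Prod>p\<in>P. (phi r e p - 1) / real p) * (\<Prod>p\<in>Pr N - P. 1) = Gs r e P * (1 / real (\<Prod>P))" by simp
      qed
      finally show ?thesis .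
    qed
    have diff: "\<bar>U N - V (\<lambda>d. 1 / real d) N\<bar> \<le> KH * (1 / real N) * ln (real N) ^ a * S (1/2)" if N: "N \<ge> 2" for N
    proof -
      define M where "M = \<Prod>(Pr N)"
      have sub1: "SP N \<subseteq> Pow (Pr N)" unfolding SP_def Pr_def by auto
      have "U N = (\<Sum>P\<in>Pow (Pr N) - SP N. Gs r e P * (1 / real (\<Prod>P))) + V (\<lambda>d. 1 / real d) N"
        unfolding U_eq V_def by (rule sum.subset_diff[OF sub1]) (simp add: finPr)
      hence "\<bar>U N - V (\<lambda>d. 1 / real d) N\<bar> = \<bar>\<Sum>P\<in>Pow (Pr N) - SP N. Gs r e P * (1 / real (\<Prod>P))\<bar>" by simp
      also have "\<dots> \<le> (\<Sum>P\<in>Pow (Pr N) - SP N. \<bar>Gs r e P\<bar> * \<bar>1 / real (\<Prod>P)\<bar>)"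
        by (rule order.trans[OF sum_abs]) (simp add: abs_mult)
      also have "\<dots> \<le> KH * (1 / real N) * ln (real N) ^ a * S (1/2)"
        unfolding S_def
      proof (rule dyadic_tail[where g = "\<lambda>P. \<bar>Gs r e P\<bar>" and \<rho> = "\<lambda>d. 1 / real d" and M = M])
        show "Pow (Pr N) - SP N \<subseteq> SP M - SP (nat \<lfloor>real N\<rfloor>)"
        proof
          fix P assume P: "P \<in> Pow (Pr N) - SP N"
          have PP: "P \<subseteq> Pr N" using P by auto
          have fin: "finite P" using PP finPr by (rule finite_subset)
          have pr: "\<forall>p\<in>P. prime p" using PP unfolding Pr_def by auto
          have "\<forall>p\<in>Pr N. prime p" unfolding Pr_def by auto
          hence "\<Prod>P \<le> M" unfolding M_def using prodP_sub_le[OF finPr _ PP] by blast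
          hence "P \<in> SP M" using fin pr SP_char by blast
          thus "P \<in> SP M - SP (nat \<lfloor>real N\<rfloor>)" using P by simp
        qed
        show "\<And>k d. 2^k * real N < real d \<Longrightarrow> real d \<le> 2^(k+1) * real N \<Longrightarrow> \<bar>1 / real d\<bar> \<le> 1 / real N * (1/2)^k"
          using blk_a[of "real N"] N by auto
      qed (use KH N in auto)
      finally show ?thesis .
    qed
    have "(\<lambda>N. U N - V (\<lambda>d. 1 / real d) N) \<longlonglongrightarrow> 0"
    proof (rule Lim_null_comparison)
      show "eventually (\<lambda>N. norm (U N - V (\<lambda>d. 1 / real d) N) \<le> KH * (1 / real N) * ln (real N) ^ a * S (1/2)) sequentially"
        using diff unfolding eventually_sequentially by (intro exI[of _ 2]) auto
      show "(\<lambda>N. KH * (1 / real N) * ln (real N) ^ a * S (1/2)) \<longlonglongrightarrow> 0"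
      proof -
        have "(\<lambda>N. KH * (1 / real N * ln (real N) ^ a) * S (1/2)) \<longlonglongrightarrow> KH * 0 * S (1/2)"
          by (intro tendsto_mult tendsto_const) real_asymp
        thus ?thesis by (simp add: mult.assoc)
      qed
    qed
    hence "(\<lambda>N. (U N - V (\<lambda>d. 1 / real d) N) + V (\<lambda>d. 1 / real d) N) \<longlonglongrightarrow> 0 + Ga"
      by (intro tendsto_add Ga(1))
    hence "U \<longlonglongrightarrow> Ga" by simp
    moreover have "sing_series r e = lim U" unfolding sing_series_def U_def Pr_def by simp
    ultimately show ?thesis by (simp add: limI)
  qed
  define dd where "dd P = (\<Prod>P :: nat)" for P :: "nat set"
  have Vdd: "V \<rho> N = (\<Sum>P\<in>SP N. Gs r e P * \<rho> (dd P))" for \<rho> N unfolding V_def dd_def ..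
  define C where "C = Cb - (if \<gamma> = -1 then Lc else 0)"
  define K where "K = KH * S (1/2) / \<bar>\<gamma> + 1\<bar> + 2 * KH * S (1 / sqrt 2) + \<bar>c\<bar> * KH * S (2 powr \<gamma>) + A * KH"
  have key: "\<bar>(\<Sum>n=1..nat \<lfloor>x\<rfloor>. jordan_quot r e n * real n powr \<beta>) - Ga * Mfun \<gamma> x - C\<bar> \<le> K * (x powr \<gamma> * ln x ^ a)"
    if x: "x \<ge> 2" for x
  proof -
    define N where "N = nat \<lfloor>x\<rfloor>"
    have N: "N \<ge> 2" "real N \<le> x" unfolding N_def using x by (simp add: le_nat_floor, linarith)
    have x0: "x > 0" using x by simp
    define X where "X = x powr \<gamma> * ln x ^ a"
    have X0: "X \<ge> 0" unfolding X_def using x by simp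
    define E where "E P = (\<Sum>m=1..nat \<lfloor>x / real (dd P)\<rfloor>. real m powr \<gamma>) - Mfun \<gamma> (x / real (dd P)) - c" for P
    have dfacts: "1 \<le> real (dd P) \<and> real (dd P) \<le> x \<and> nat \<lfloor>x / real (dd P)\<rfloor> = N div dd P" if P: "P \<in> SP N" for P
    proof -
      have fin: "finite P" "\<forall>p\<in>P. prime p" "dd P \<le> N" using P SP_char unfolding dd_def by auto
      have d0: "dd P > 0" unfolding dd_def using prodP_pos fin(1,2) by blast
      have "\<lfloor>x / real (dd P)\<rfloor> = \<lfloor>x\<rfloor> div int (dd P)" using floor_divide_real_eq_div[of "int (dd P)" x] by simp
      hence "nat \<lfloor>x / real (dd P)\<rfloor> = nat \<lfloor>x\<rfloor> div nat (int (dd P))" using x by (simp add: nat_div_distrib)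
      hence "nat \<lfloor>x / real (dd P)\<rfloor> = N div dd P" unfolding N_def by simp
      moreover have "real (dd P) \<le> x" using fin(3) N by linarith
      moreover have "1 \<le> real (dd P)" using d0 by simp
      ultimately show ?thesis by simp
    qed
    have inner: "(\<Sum>m=1..N div \<Prod>P. real (\<Prod>P * m) powr \<gamma>) = real (dd P) powr \<gamma> * (Mfun \<gamma> (x / real (dd P)) + c + E P)"
      if P: "P \<in> SP N" for P
    proof -
      have eq: "nat \<lfloor>x / real (dd P)\<rfloor> = N div dd P" using dfacts[OF P] by simp
      have "(\<Sum>m=1..N div \<Prod>P. real (\<Prod>P * m) powr \<gamma>) = (\<Sum>m=1..N div dd P. real (dd P) powr \<gamma> * real m powr \<gamma>)"
        unfolding dd_def by (intro sum.cong refl) (simp add: powr_mult)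
      also have "\<dots> = real (dd P) powr \<gamma> * (\<Sum>m=1..nat \<lfloor>x / real (dd P)\<rfloor>. real m powr \<gamma>)"
        unfolding eq by (simp add: sum_distrib_left)
      also have "\<dots> = real (dd P) powr \<gamma> * (Mfun \<gamma> (x / real (dd P)) + c + E P)" unfolding E_def by simp
      finally show ?thesis .
    qed
    define T1 where "T1 = (\<Sum>P\<in>SP N. Gs r e P * (real (dd P) powr \<gamma> * Mfun \<gamma> (x / real (dd P))))"
    define T3 where "T3 = (\<Sum>P\<in>SP N. Gs r e P * (real (dd P) powr \<gamma> * E P))"
    have split: "(\<Sum>n=1..N. jordan_quot r e n * real n powr \<beta>) = T1 + c * V (\<lambda>d. real d powr \<gamma>) N + T3"
    proof -
      have "(\<Sum>n=1..N. jordan_quot r e n * real n powr \<beta>) =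
          (\<Sum>P\<in>SP N. Gs r e P * (\<Sum>m=1..N div \<Prod>P. real (\<Prod>P * m) powr \<gamma>))"
        using conv_identity[of N r e \<beta>] N unfolding \<gamma>_def by simp
      also have "\<dots> = (\<Sum>P\<in>SP N. Gs r e P * (real (dd P) powr \<gamma> * Mfun \<gamma> (x / real (dd P)))
                 + c * (Gs r e P * real (dd P) powr \<gamma>) + Gs r e P * (real (dd P) powr \<gamma> * E P))"
        by (intro sum.cong refl, subst inner, simp_all add: algebra_simps)
      also have "\<dots> = T1 + c * V (\<lambda>d. real d powr \<gamma>) N + T3"
        unfolding T1_def T3_def Vdd by (simp add: sum.distrib sum_distrib_left)
      finally show ?thesis .
    qed
    have T3b: "\<bar>T3\<bar> \<le> A * KH * X"
    proof -
      have "\<bar>T3\<bar> \<le> (\<Sum>P\<in>SP N. \<bar>Gs r e P * (real (dd P) powr \<gamma> * E P)\<bar>)" unfolding T3_def by (rule sum_abs)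
      also have "\<dots> \<le> (\<Sum>P\<in>SP N. \<bar>Gs r e P\<bar> * (A * x powr \<gamma>))"
      proof (intro sum_mono)
        fix P assume P: "P \<in> SP N"
        have df: "1 \<le> real (dd P)" "real (dd P) \<le> x" using dfacts[OF P] by auto
        have y1: "x / real (dd P) \<ge> 1" using df by simp
        have "\<bar>E P\<bar> \<le> A * (x / real (dd P)) powr \<gamma>" unfolding E_def by (rule cA(3)[OF y1])
        hence "real (dd P) powr \<gamma> * \<bar>E P\<bar> \<le> real (dd P) powr \<gamma> * (A * (x / real (dd P)) powr \<gamma>)"
          by (rule mult_left_mono) simp
        also have "\<dots> = A * x powr \<gamma>" using df by (simp add: powr_divide)
        finally have "real (dd P) powr \<gamma> * \<bar>E P\<bar> \<le> A * x powr \<gamma>" .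
        hence "\<bar>Gs r e P\<bar> * (real (dd P) powr \<gamma> * \<bar>E P\<bar>) \<le> \<bar>Gs r e P\<bar> * (A * x powr \<gamma>)"
          by (rule mult_left_mono) simp
        thus "\<bar>Gs r e P * (real (dd P) powr \<gamma> * E P)\<bar> \<le> \<bar>Gs r e P\<bar> * (A * x powr \<gamma>)"
          by (simp add: abs_mult)
      qed
      also have "\<dots> = (A * x powr \<gamma>) * (\<Sum>P\<in>SP N. \<bar>Gs r e P\<bar>)" by (simp add: sum_distrib_left mult.commute)
      also have "\<dots> \<le> (A * x powr \<gamma>) * (KH * ln x ^ a)"
        using KH(2)[OF x] cA(1) unfolding N_def by (intro mult_left_mono) auto
      also have "\<dots> = A * KH * X" unfolding X_def by (simp add: mult_ac)
      finally show ?thesis .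
    qed
    have T2b: "\<bar>c * V (\<lambda>d. real d powr \<gamma>) N - Cb\<bar> \<le> \<bar>c\<bar> * KH * S (2 powr \<gamma>) * X"
      using Cb[OF x] unfolding N_def X_def .
    have T1b: "\<bar>T1 - Ga * Mfun \<gamma> x + (if \<gamma> = -1 then Lc else 0)\<bar> \<le> (KH * S (1/2) / \<bar>\<gamma> + 1\<bar> + 2 * KH * S (1 / sqrt 2)) * X"
    proof (cases "\<gamma> = -1")
      case False
      have g1: "\<gamma> + 1 \<noteq> 0" using False by linarith
      have "T1 = Mfun \<gamma> x * V (\<lambda>d. 1 / real d) N"
        unfolding T1_def Vdd sum_distrib_left
      proof (intro sum.cong refl)
        fix P assume P: "P \<in> SP N"
        have df: "1 \<le> real (dd P)" using dfacts[OF P] by auto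
        have dne: "real (dd P) \<noteq> 0" using df by simp
        have r1: "real (dd P) powr \<gamma> / real (dd P) powr (\<gamma> + 1) = 1 / real (dd P)"
          using df by (simp add: powr_add)
        have "real (dd P) powr \<gamma> * Mfun \<gamma> (x / real (dd P)) = x powr (\<gamma> + 1) / (\<gamma> + 1) * (real (dd P) powr \<gamma> / real (dd P) powr (\<gamma> + 1))"
          unfolding Mfun_def using False g1 dne by (simp add: powr_divide field_simps)
        also have "\<dots> = Mfun \<gamma> x * (1 / real (dd P))" unfolding r1 Mfun_def using False by simp
        finally have "real (dd P) powr \<gamma> * Mfun \<gamma> (x / real (dd P)) = Mfun \<gamma> x * (1 / real (dd P))" .
        thus "Gs r e P * (real (dd P) powr \<gamma> * Mfun \<gamma> (x / real (dd P))) = Mfun \<gamma> x * (Gs r e P * (1 / real (dd P)))"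
          by simp
      qed
      hence "T1 - Ga * Mfun \<gamma> x + (if \<gamma> = -1 then Lc else 0) = Mfun \<gamma> x * (V (\<lambda>d. 1 / real d) N - Ga)"
        using False by (simp add: algebra_simps)
      hence "\<bar>T1 - Ga * Mfun \<gamma> x + (if \<gamma> = -1 then Lc else 0)\<bar> = \<bar>Mfun \<gamma> x\<bar> * \<bar>V (\<lambda>d. 1 / real d) N - Ga\<bar>"
        by (simp add: abs_mult)
      also have "\<dots> \<le> \<bar>Mfun \<gamma> x\<bar> * (KH * (1 / x) * ln x ^ a * S (1/2))"
        using Ga(2)[OF x] unfolding N_def by (intro mult_left_mono) auto
      also have "\<dots> = KH * S (1/2) / \<bar>\<gamma> + 1\<bar> * X"
        using False x0 g1 unfolding X_def Mfun_def
        by (simp add: abs_divide powr_add field_simps)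
      also have "\<dots> \<le> (KH * S (1/2) / \<bar>\<gamma> + 1\<bar> + 2 * KH * S (1 / sqrt 2)) * X"
        using X0 KH(1) S0[OF s2] by (intro mult_right_mono) auto
      finally show ?thesis .
    next
      case True
      define \<rho>x where "\<rho>x d = ln (real d / x) / real d" for d :: nat
      have lin: "V \<rho>x M = V (\<lambda>d. ln (real d) / real d) M - ln x * V (\<lambda>d. 1 / real d) M" for M
        unfolding Vdd sum_distrib_left sum_subtractf[symmetric]
      proof (intro sum.cong refl)
        fix P assume P: "P \<in> SP M"
        have d0: "real (dd P) > 0" using P SP_char prodP_pos unfolding dd_def by (metis of_nat_0_less_iff)
        show "Gs r e P * \<rho>x (dd P) = Gs r e P * (ln (real (dd P)) / real (dd P)) - ln x * (Gs r e P * (1 / real (dd P)))"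
          unfolding \<rho>x_def using d0 x0 by (simp add: ln_div field_simps)
      qed
      have limx: "V \<rho>x \<longlonglongrightarrow> Lc - ln x * Ga"
        unfolding lin by (intro tendsto_intros Lc Ga(1))
      have bdx: "\<bar>V \<rho>x M - V \<rho>x N\<bar> \<le> KH * (2 / x) * ln x ^ a * S (1 / sqrt 2)" if "M \<ge> N" for M
        unfolding N_def
      proof (rule td)
        show "\<And>k d. 2^k * x < real d \<Longrightarrow> \<bar>\<rho>x d\<bar> \<le> 2 / x * (1 / sqrt 2)^k"
          unfolding \<rho>x_def using blk_d[OF x] by blast
      qed (use x that s2 N_def in auto)
      have "\<bar>V \<rho>x N - (Lc - ln x * Ga)\<bar> \<le> KH * (2 / x) * ln x ^ a * S (1 / sqrt 2)"
        by (rule lim_bound[OF limx bdx])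
      moreover have "T1 = - V \<rho>x N"
        unfolding T1_def Vdd sum_negf[symmetric]
      proof (intro sum.cong refl)
        fix P assume P: "P \<in> SP N"
        have df: "1 \<le> real (dd P)" using dfacts[OF P] by auto
        show "Gs r e P * (real (dd P) powr \<gamma> * Mfun \<gamma> (x / real (dd P))) = - (Gs r e P * \<rho>x (dd P))"
          unfolding \<rho>x_def Mfun_def using True df x0 by (simp add: powr_neg_one ln_div field_simps)
      qed
      moreover have "Mfun \<gamma> x = ln x" using True by (simp add: Mfun_def)
      ultimately have "\<bar>T1 - Ga * Mfun \<gamma> x + (if \<gamma> = -1 then Lc else 0)\<bar> \<le> KH * (2 / x) * ln x ^ a * S (1 / sqrt 2)"
        using True by (simp add: algebra_simps abs_minus_commute)
      also have "\<dots> = 2 * KH * S (1 / sqrt 2) * X" unfolding X_def using True x0 by (simp add: powr_neg_one)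
      also have "\<dots> \<le> (KH * S (1/2) / \<bar>\<gamma> + 1\<bar> + 2 * KH * S (1 / sqrt 2)) * X"
        using X0 KH(1) S0[OF half] by (intro mult_right_mono) auto
      finally show ?thesis .
    qed
    have "(\<Sum>n=1..N. jordan_quot r e n * real n powr \<beta>) - Ga * Mfun \<gamma> x - C =
        (T1 - Ga * Mfun \<gamma> x + (if \<gamma> = -1 then Lc else 0)) + (c * V (\<lambda>d. real d powr \<gamma>) N - Cb) + T3"
      unfolding split C_def by simp
    hence "\<bar>(\<Sum>n=1..N. jordan_quot r e n * real n powr \<beta>) - Ga * Mfun \<gamma> x - C\<bar> \<le>
        (KH * S (1/2) / \<bar>\<gamma> + 1\<bar> + 2 * KH * S (1 / sqrt 2)) * X + \<bar>c\<bar> * KH * S (2 powr \<gamma>) * X + A * KH * X"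
      using T1b T2b T3b by linarith
    also have "\<dots> = K * X" unfolding K_def by (simp add: algebra_simps)
    finally show ?thesis unfolding N_def X_def .
  qed
  show ?thesis
  proof (rule exI[of _ C], rule exI[of _ K], intro allI impI)
    fix x :: real assume x: "x \<ge> 2"
    have "\<bar>(\<Sum>n=1..nat \<lfloor>x\<rfloor>. jordan_quot r e n * real n powr \<beta>) - Ga * Mfun \<gamma> x - C\<bar> \<le> K * (x powr \<gamma> * ln x ^ a)"
      by (rule key[OF x])
    thus "\<bar>(\<Sum>n=1..nat \<lfloor>x\<rfloor>. jordan_quot r e n * real n powr \<beta>)
        - sing_series r e * Mfun (\<beta> + real_of_int (weight r e)) x - C\<bar>
     \<le> K * x powr (\<beta> + real_of_int (weight r e)) * ln x ^ nat \<bar>e 1\<bar>"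
      unfolding sing \<gamma>_def a_def by (simp add: mult.assoc)
  qed
qed

end
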